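(* Let $\varepsilon>0$ and $m\ge 0$ be real numbers with $0\le m\varepsilon\le 1$. Then $$\lim_{\substack{t\to+\infty\\ t\in\varepsilon\mathbb{Z}}}\ \sum_{x\in\varepsilon\mathbb{Z}} a_1(x,t,m,\varepsilon)^2=\frac{m\varepsilon}{2\sqrt{1+m^2\varepsilon^2}}.$$
   Context: Fix $\varepsilon>0$ (lattice step) and $m\ge 0$ (mass). Consider the lattice $\varepsilon\mathbb{Z}^2=\{(x,t): x/\varepsilon,\ t/\varepsilon\in\mathbb{Z}\}$. A checker path on $\varepsilon\mathbb{Z}^2$ is a finite sequence of points of $\varepsilon\mathbb{Z}^2$ such that the vector from each point (except the last) to the next equals either $(\varepsilon,\varepsilon)$ or $(-\varepsilon,\varepsilon)$. A turn of a path is a point of the path (not the first and not the last) such that the vectors from it to the next point and to the previous point are orthogonal; $\mathrm{turns}(s)$ denotes the number of turns of $s$. For $(x,t)\in\varepsilon\mathbb{Z}^2$ with $t>0$ define $$a(x,t,m,\varepsilon):=(1+m^2\varepsilon^2)^{(1-t/\varepsilon)/2}\, i \sum_s(-im\varepsilon)^{\mathrm{turns}(s)},$$ the sum over all checker paths $s$ on $\varepsilon\mathbb{Z}^2$ from $(0,0)$ to $(x,t)$ whose first step goes to $(\varepsilon,\varepsilon)$ (an empty sum is $0$, and $(-im\varepsilon)^0=1$). Let $a_1(x,t,m,\varepsilon)$ denote the real part of $a(x,t,m,\varepsilon)$. *)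

theory Defs
  imports "HOL-Analysis.Analysis"
begin

definition lattice_pt :: "real \<Rightarrow> real \<times> real \<Rightarrow> bool" where
  "lattice_pt eps p \<longleftrightarrow> (\<exists>k l :: int. p = (of_int k * eps, of_int l * eps))"

definition checker_path :: "real \<Rightarrow> (real \<times> real) list \<Rightarrow> bool" where
  "checker_path eps s \<longleftrightarrow> s \<noteq> [] \<and> (\<forall>p \<in> set s. lattice_pt eps p) \<and>
     (\<forall>i. Suc i < length s \<longrightarrow>
        (s ! Suc i = (fst (s ! i) + eps, snd (s ! i) + eps) \<or>
         s ! Suc i = (fst (s ! i) - eps, snd (s ! i) + eps)))"

definition is_turn :: "(real \<times> real) list \<Rightarrow> nat \<Rightarrow> bool" where
  "is_turn s i \<longleftrightarrow> 0 < i \<and> Suc i < length s \<and>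
     (fst (s ! Suc i) - fst (s ! i)) * (fst (s ! (i - 1)) - fst (s ! i)) +
     (snd (s ! Suc i) - snd (s ! i)) * (snd (s ! (i - 1)) - snd (s ! i)) = 0"

definition turns :: "(real \<times> real) list \<Rightarrow> nat" where
  "turns s = card {i. is_turn s i}"

definition paths_to :: "real \<Rightarrow> real \<Rightarrow> real \<Rightarrow> (real \<times> real) list set" where
  "paths_to eps x t = {s. checker_path eps s \<and> 2 \<le> length s \<and> hd s = (0, 0) \<and>
      s ! 1 = (eps, eps) \<and> last s = (x, t)}"

definition a :: "real \<Rightarrow> real \<Rightarrow> real \<Rightarrow> real \<Rightarrow> complex" where
  "a x t m eps = complex_of_real ((1 + m\<^sup>2 * eps\<^sup>2) powr ((1 - t / eps) / 2)) * \<i> *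
     (\<Sum>s \<in> paths_to eps x t. (- \<i> * complex_of_real (m * eps)) ^ turns s)"

definition a1 :: "real \<Rightarrow> real \<Rightarrow> real \<Rightarrow> real \<Rightarrow> real" where
  "a1 x t m eps = Re (a x t m eps)"

end

theory Submission
  imports Defs
begin

lemma cp_step:
  assumes "checker_path eps s" "Suc i < length s"
  shows "snd (s ! Suc i) = snd (s ! i) + eps \<and>
         (fst (s ! Suc i) = fst (s ! i) + eps \<or> fst (s ! Suc i) = fst (s ! i) - eps)"
  using assms unfolding checker_path_def by fastforce

lemma cp_snd:
  assumes "checker_path eps s" "i < length s"
  shows "snd (s ! i) = snd (s ! 0) + real i * eps"
  using assms(2)
proof (induction i)
  case 0 then show ?case by simp
next
  case (Suc i)
  then show ?case using cp_step[OF assms(1) Suc.prems] by (simp add: algebra_simps)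
qed

lemma paths_len:
  assumes "s \<in> paths_to eps x t"
  shows "t = real (length s - 1) * eps"
proof -
  have cp: "checker_path eps s" and l: "2 \<le> length s" and h: "hd s = (0,0)" and la: "last s = (x,t)"
    using assms unfolding paths_to_def by auto
  have ne: "s \<noteq> []" using l by auto
  have la': "s ! (length s - 1) = (x,t)" using la ne by (simp add: last_conv_nth)
  have h': "s ! 0 = (0,0)" using h ne by (simp add: hd_conv_nth)
  have e: "snd (s ! (length s - 1)) = snd (s ! 0) + real (length s - 1) * eps"
    by (rule cp_snd[OF cp]) (use ne in simp)
  show ?thesis using e la' h' by simp
qed

lemma paths_len2:
  assumes "s \<in> paths_to eps x t" "eps > 0"
  shows "real (length s) = t / eps + 1"
  using paths_len[OF assms(1)] assms(2) paths_to_def assms(1)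
  by (auto simp: field_simps of_nat_diff)

lemma lattice_step:
  assumes "lattice_pt eps (x,t)" "x' = x + eps \<or> x' = x - eps"
  shows "lattice_pt eps (x', t + eps)"
proof -
  obtain k l :: int where "(x,t) = (of_int k * eps, of_int l * eps)"
    using assms(1) unfolding lattice_pt_def by blast
  then have xt: "x = of_int k * eps" "t = of_int l * eps" by auto
  show ?thesis using assms(2)
  proof
    assume "x' = x + eps"
    then have "(x', t + eps) = (of_int (k+1) * eps, of_int (l+1) * eps)"
      using xt by (simp add: algebra_simps)
    then show ?thesis unfolding lattice_pt_def by blast
  next
    assume "x' = x - eps"
    then have "(x', t + eps) = (of_int (k-1) * eps, of_int (l+1) * eps)"
      using xt by (simp add: algebra_simps)
    then show ?thesis unfolding lattice_pt_def by blast
  qed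
qed

lemma paths_append:
  assumes "s \<in> paths_to eps x t" "x' = x + eps \<or> x' = x - eps"
  shows "s @ [(x', t + eps)] \<in> paths_to eps x' (t + eps)"
proof -
  have cp: "checker_path eps s" and l: "2 \<le> length s" and h: "hd s = (0,0)" and la: "last s = (x,t)"
    and s1: "s ! 1 = (eps, eps)"
    using assms unfolding paths_to_def by auto
  have ne: "s \<noteq> []" using l by auto
  have lastnth: "s ! (length s - 1) = (x,t)" using la ne by (simp add: last_conv_nth)
  have "lattice_pt eps (x,t)" using cp la l unfolding checker_path_def
    by (metis last_in_set)
  then have lat: "lattice_pt eps (x', t + eps)" using lattice_step assms(2) by blast
  have "checker_path eps (s @ [(x', t + eps)])"
    unfolding checker_path_def
  proof (intro conjI allI impI)
    show "s @ [(x', t + eps)] \<noteq> []" by simp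
    show "\<forall>p\<in>set (s @ [(x', t + eps)]). lattice_pt eps p"
      using cp lat unfolding checker_path_def by auto
    fix i assume i: "Suc i < length (s @ [(x', t + eps)])"
    show "(s @ [(x', t + eps)]) ! Suc i = (fst ((s @ [(x', t + eps)]) ! i) + eps, snd ((s @ [(x', t + eps)]) ! i) + eps) \<or>
          (s @ [(x', t + eps)]) ! Suc i = (fst ((s @ [(x', t + eps)]) ! i) - eps, snd ((s @ [(x', t + eps)]) ! i) + eps)"
    proof (cases "Suc i < length s")
      case True
      then show ?thesis using cp unfolding checker_path_def by (simp add: nth_append)
    next
      case False
      then have "i = length s - 1" using i by simp
      then show ?thesis using lastnth assms(2) l by (auto simp: nth_append)
    qed
  qed
  then show ?thesis unfolding paths_to_def using l h s1
    by (auto simp: nth_append hd_append)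
qed

lemma paths_butlast:
  assumes "s' \<in> paths_to eps x' t'" "3 \<le> length s'"
  shows "butlast s' \<in> paths_to eps (fst (s' ! (length s' - 2))) (snd (s' ! (length s' - 2)))"
    and "s' = butlast s' @ [(x', t')]"
    and "snd (s' ! (length s' - 2)) = t' - eps"
    and "fst (s' ! (length s' - 2)) = x' - eps \<or> fst (s' ! (length s' - 2)) = x' + eps"
proof -
  have cp: "checker_path eps s'" and h: "hd s' = (0,0)" and la: "last s' = (x',t')"
    and s1: "s' ! 1 = (eps, eps)"
    using assms unfolding paths_to_def by auto
  have ne: "s' \<noteq> []" using assms(2) by auto
  have lastnth: "s' ! (length s' - 1) = (x',t')" using la ne by (simp add: last_conv_nth)
  have st: "snd (s' ! Suc (length s' - 2)) = snd (s' ! (length s' - 2)) + eps \<and>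
         (fst (s' ! Suc (length s' - 2)) = fst (s' ! (length s' - 2)) + eps \<or>
          fst (s' ! Suc (length s' - 2)) = fst (s' ! (length s' - 2)) - eps)"
    using cp_step[OF cp, of "length s' - 2"] assms(2) by simp
  have e: "Suc (length s' - 2) = length s' - 1" using assms(2) by simp
  show "snd (s' ! (length s' - 2)) = t' - eps" using st lastnth e by simp
  show "fst (s' ! (length s' - 2)) = x' - eps \<or> fst (s' ! (length s' - 2)) = x' + eps"
    using st lastnth e by auto
  show "s' = butlast s' @ [(x', t')]" using la assms(2)
    by (metis append_butlast_last_id list.size(3) not_numeral_le_zero)
  let ?s = "butlast s'"
  have ls: "length ?s = length s' - 1" by simp
  have nth: "\<And>j. j < length ?s \<Longrightarrow> ?s ! j = s' ! j" by (simp add: nth_butlast)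
  have "checker_path eps ?s" unfolding checker_path_def
  proof (intro conjI allI impI)
    show "?s \<noteq> []" using assms(2) by (cases s') auto
    show "\<forall>p\<in>set ?s. lattice_pt eps p" using cp unfolding checker_path_def
      by (meson in_set_butlastD)
    fix i assume i: "Suc i < length ?s"
    then show "?s ! Suc i = (fst (?s ! i) + eps, snd (?s ! i) + eps) \<or>
          ?s ! Suc i = (fst (?s ! i) - eps, snd (?s ! i) + eps)"
      using cp unfolding checker_path_def by (simp add: nth_butlast)
  qed
  moreover have "hd ?s = (0,0)"
  proof -
    have "?s \<noteq> []" using assms(2) by (cases s') auto
    then have "hd ?s = ?s ! 0" by (simp add: hd_conv_nth)
    also have "\<dots> = s' ! 0" using assms(2) by (simp add: nth_butlast)
    also have "\<dots> = hd s'" using ne by (simp add: hd_conv_nth)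
    finally show ?thesis using h by simp
  qed
  moreover have "?s ! 1 = (eps,eps)" using s1 assms(2) by (simp add: nth_butlast)
  moreover have "last ?s = s' ! (length s' - 2)"
  proof -
    have "?s \<noteq> []" using assms(2) by (cases s') auto
    then have "last ?s = ?s ! (length ?s - 1)" by (simp add: last_conv_nth)
    also have "\<dots> = s' ! (length s' - 2)" using assms(2) by (simp add: nth_butlast numeral_2_eq_2)
    finally show ?thesis .
  qed
  ultimately show "?s \<in> paths_to eps (fst (s' ! (length s' - 2))) (snd (s' ! (length s' - 2)))"
    unfolding paths_to_def using assms(2) by auto
qed

lemma turns_finite: "finite {i. is_turn s i}"
  by (rule finite_subset[of _ "{..<length s}"]) (auto simp: is_turn_def)

lemma turn_aux: fixes eps d a b c :: real
  shows "eps > 0 \<Longrightarrow> (d = eps \<or> d = -eps) \<Longrightarrow> (a = b - eps \<or> a = b + eps) \<Longrightarrow>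
   (d*(a-b) + eps*((c - eps) - c) = 0 \<longleftrightarrow> b - a \<noteq> d)"
  by (elim disjE) (auto simp: algebra_simps)

lemma turns_append:
  assumes cp: "checker_path eps s" and l: "2 \<le> length s" and e: "eps > 0"
    and d: "d = eps \<or> d = - eps"
  shows "turns (s @ [(fst (last s) + d, snd (last s) + eps)]) =
         turns s + (if fst (last s) - fst (s ! (length s - 2)) \<noteq> d then 1 else 0)"
proof -
  let ?p = "(fst (last s) + d, snd (last s) + eps)"
  let ?s = "s @ [?p]"
  let ?L = "length s"
  have ne: "s \<noteq> []" using l by auto
  have lastn: "s ! (?L - 1) = last s" using ne by (simp add: last_conv_nth)
  have A: "\<And>i. i < ?L - 1 \<Longrightarrow> is_turn ?s i \<longleftrightarrow> is_turn s i"
    unfolding is_turn_def by (auto simp: nth_append)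
  have B: "\<And>i. i \<ge> ?L \<Longrightarrow> \<not> is_turn ?s i" unfolding is_turn_def by auto
  have C: "\<not> is_turn s (?L - 1)" unfolding is_turn_def by auto
  have st: "snd (s ! Suc (?L - 2)) = snd (s ! (?L - 2)) + eps \<and>
         (fst (s ! Suc (?L - 2)) = fst (s ! (?L - 2)) + eps \<or>
          fst (s ! Suc (?L - 2)) = fst (s ! (?L - 2)) - eps)"
    using cp_step[OF cp, of "?L - 2"] l by simp
  have e2: "Suc (?L - 2) = ?L - 1" using l by simp
  have st': "snd (last s) = snd (s ! (?L - 2)) + eps \<and>
         (fst (last s) - fst (s ! (?L - 2)) = eps \<or> fst (last s) - fst (s ! (?L - 2)) = - eps)"
    using st e2 lastn by auto
  have D: "is_turn ?s (?L - 1) \<longleftrightarrow> fst (last s) - fst (s ! (?L - 2)) \<noteq> d"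
  proof -
    have "Suc (?L - 1) = ?L" using l by simp
    then have i1: "?s ! Suc (?L - 1) = ?p" by simp
    have lt: "?L - 1 < ?L" "?L - 1 - 1 < ?L" using l by auto
    have i2: "?s ! (?L - 1) = last s" using lt lastn by (simp add: nth_append)
    have i3: "?s ! (?L - 1 - 1) = s ! (?L - 2)" using lt by (simp add: nth_append numeral_2_eq_2)
    have "is_turn ?s (?L - 1) \<longleftrightarrow>
       d * (fst (s ! (?L - 2)) - fst (last s)) + eps * (snd (s ! (?L - 2)) - snd (last s)) = 0"
      unfolding is_turn_def i1 i2 i3 using l lt by simp
    also have "\<dots> \<longleftrightarrow> fst (last s) - fst (s ! (?L - 2)) \<noteq> d"
    proof -
      have sn: "snd (s ! (?L - 2)) = snd (last s) - eps" using st' by simp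
      have "fst (s ! (?L - 2)) = fst (last s) - eps \<or> fst (s ! (?L - 2)) = fst (last s) + eps"
        using st' by auto
      from this show ?thesis unfolding sn by (rule turn_aux[OF e d])
    qed
    finally show ?thesis .
  qed
  define T where "T = is_turn ?s (?L - 1)"
  have S: "{i. is_turn ?s i} = {i. is_turn s i} \<union> (if T then {?L - 1} else {})"
  proof -
    have "\<And>i. is_turn ?s i \<longleftrightarrow> (is_turn s i \<or> (i = ?L - 1 \<and> T))"
    proof -
      fix i
      consider "i < ?L - 1" | "i = ?L - 1" | "i \<ge> ?L" by linarith
      then show "is_turn ?s i \<longleftrightarrow> (is_turn s i \<or> (i = ?L - 1 \<and> T))"
      proof cases
        case 1 then show ?thesis using A[OF 1] by simp
      next
        case 2 then show ?thesis using C T_def by simp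
      next
        case 3 then show ?thesis using B[OF 3] l is_turn_def by auto
      qed
    qed
    then show ?thesis by (auto split: if_splits)
  qed
  have "?L - 1 \<notin> {i. is_turn s i}" using C by simp
  then show ?thesis unfolding turns_def S D[symmetric] T_def[symmetric]
    using turns_finite[of s] by (auto simp: card_insert_if)
qed

lemma len3:
  assumes "s \<in> paths_to eps x (t + eps)" "eps > 0" "eps \<le> t"
  shows "3 \<le> length s"
proof -
  have "real (length s) = (t + eps) / eps + 1" using paths_len2[OF assms(1,2)] .
  also have "(t + eps) / eps = t / eps + 1" using assms(2) by (simp add: field_simps)
  also have "t / eps \<ge> 1" using assms(2,3) by (simp add: field_simps)
  ultimately show ?thesis by linarith
qed

lemma last_prev_fst:
  assumes "s \<in> paths_to eps x (t + eps)" "eps > 0" "eps \<le> t"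
  shows "fst (s ! (length s - 2)) = x - eps \<or> fst (s ! (length s - 2)) = x + eps"
  using paths_butlast(4)[OF assms(1) len3[OF assms]] by simp

lemma app_prev:
  assumes "s \<noteq> []" shows "(s @ [p]) ! (length (s @ [p]) - 2) = last s"
proof -
  have e: "length (s @ [p]) - 2 = length s - 1" by simp
  have "length s - 1 < length s" using assms by simp
  then show ?thesis unfolding e using assms by (simp add: nth_append last_conv_nth)
qed

lemma decompR:
  assumes "eps > 0" "eps \<le> t"
  shows "{s \<in> paths_to eps x (t + eps). fst (s ! (length s - 2)) < x} =
         (\<lambda>s. s @ [(x, t + eps)]) ` paths_to eps (x - eps) t"
proof (intro set_eqI iffI)
  fix s' assume "s' \<in> {s \<in> paths_to eps x (t + eps). fst (s ! (length s - 2)) < x}"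
  then have s': "s' \<in> paths_to eps x (t + eps)" and lt: "fst (s' ! (length s' - 2)) < x" by auto
  have l3: "3 \<le> length s'" using len3[OF s' assms] .
  note B = paths_butlast[OF s' l3]
  have f: "fst (s' ! (length s' - 2)) = x - eps" using B(4) lt assms(1) by auto
  have sn: "snd (s' ! (length s' - 2)) = t" using B(3) by simp
  have "butlast s' \<in> paths_to eps (x - eps) t" using B(1) f sn by simp
  then show "s' \<in> (\<lambda>s. s @ [(x, t + eps)]) ` paths_to eps (x - eps) t"
    using B(2) by blast
next
  fix s' assume "s' \<in> (\<lambda>s. s @ [(x, t + eps)]) ` paths_to eps (x - eps) t"
  then obtain s where s: "s \<in> paths_to eps (x - eps) t" and s'd: "s' = s @ [(x, t + eps)]" by auto
  have "s @ [(x, t + eps)] \<in> paths_to eps x (t + eps)"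
    using paths_append[OF s, of x] by simp
  moreover have "fst ((s @ [(x, t + eps)]) ! (length (s @ [(x, t + eps)]) - 2)) < x"
  proof -
    have l: "2 \<le> length s" and la: "last s = (x - eps, t)" using s unfolding paths_to_def by auto
    then have "(s @ [(x, t + eps)]) ! (length (s @ [(x, t + eps)]) - 2) = last s"
      by (intro app_prev) auto
    then show ?thesis using la assms(1) by simp
  qed
  ultimately show "s' \<in> {s \<in> paths_to eps x (t + eps). fst (s ! (length s - 2)) < x}"
    using s'd by simp
qed

lemma decompL:
  assumes "eps > 0" "eps \<le> t"
  shows "{s \<in> paths_to eps x (t + eps). fst (s ! (length s - 2)) > x} =
         (\<lambda>s. s @ [(x, t + eps)]) ` paths_to eps (x + eps) t"
proof (intro set_eqI iffI)
  fix s' assume "s' \<in> {s \<in> paths_to eps x (t + eps). fst (s ! (length s - 2)) > x}"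
  then have s': "s' \<in> paths_to eps x (t + eps)" and lt: "fst (s' ! (length s' - 2)) > x" by auto
  have l3: "3 \<le> length s'" using len3[OF s' assms] .
  note B = paths_butlast[OF s' l3]
  have f: "fst (s' ! (length s' - 2)) = x + eps" using B(4) lt assms(1) by auto
  have sn: "snd (s' ! (length s' - 2)) = t" using B(3) by simp
  have "butlast s' \<in> paths_to eps (x + eps) t" using B(1) f sn by simp
  then show "s' \<in> (\<lambda>s. s @ [(x, t + eps)]) ` paths_to eps (x + eps) t"
    using B(2) by blast
next
  fix s' assume "s' \<in> (\<lambda>s. s @ [(x, t + eps)]) ` paths_to eps (x + eps) t"
  then obtain s where s: "s \<in> paths_to eps (x + eps) t" and s'd: "s' = s @ [(x, t + eps)]" by auto
  have "s @ [(x, t + eps)] \<in> paths_to eps x (t + eps)"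
    using paths_append[OF s, of x] by simp
  moreover have "fst ((s @ [(x, t + eps)]) ! (length (s @ [(x, t + eps)]) - 2)) > x"
  proof -
    have l: "2 \<le> length s" and la: "last s = (x + eps, t)" using s unfolding paths_to_def by auto
    then have "(s @ [(x, t + eps)]) ! (length (s @ [(x, t + eps)]) - 2) = last s"
      by (intro app_prev) auto
    then show ?thesis using la assms(1) by simp
  qed
  ultimately show "s' \<in> {s \<in> paths_to eps x (t + eps). fst (s ! (length s - 2)) > x}"
    using s'd by simp
qed

lemma paths_split:
  assumes "eps > 0" "eps \<le> t"
  shows "paths_to eps x (t + eps) =
     {s \<in> paths_to eps x (t + eps). fst (s ! (length s - 2)) < x} \<union>
     {s \<in> paths_to eps x (t + eps). fst (s ! (length s - 2)) > x}"
  using last_prev_fst[OF _ assms, of _ x] assms(1) by fastforce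

lemma paths_base:
  assumes "eps > 0"
  shows "paths_to eps x eps = (if x = eps then {[(0,0),(eps,eps)]} else {})"
proof -
  have P1: "s = [(0,0),(eps,eps)] \<and> x = eps" if s: "s \<in> paths_to eps x eps" for s
  proof -
    have "real (length s) = eps / eps + 1" using paths_len2[OF s assms] by simp
    then have "real (length s) = 2" using assms by simp
    then have l: "length s = 2" by linarith
    have h: "hd s = (0,0)" and s1: "s ! 1 = (eps,eps)" and la: "last s = (x, eps)"
      using s unfolding paths_to_def by auto
    from l obtain a r where sr: "s = a # r" and lr: "length r = 1" by (cases s) auto
    from lr obtain b where "r = [b]" by (cases r) auto
    with sr have sab: "s = [a, b]" by simp
    have a0: "a = (0,0)" using h sab by simp
    have b1: "b = (eps, eps)" using s1 sab by simp
    have b2: "b = (x, eps)" using la sab by simp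
    have xe: "x = eps" using b1 b2 by (metis prod.inject)
    show ?thesis using sab a0 b1 xe by blast
  qed
  have P2: "[(0,0),(eps,eps)] \<in> paths_to eps eps eps"
  proof -
    have "(0::real,0::real) = (of_int (0::int) * eps, of_int (0::int) * eps)" by simp
    then have l0: "lattice_pt eps (0,0)" unfolding lattice_pt_def by blast
    have "(eps,eps) = (of_int (1::int) * eps, of_int (1::int) * eps)" by simp
    then have l1: "lattice_pt eps (eps,eps)" unfolding lattice_pt_def by blast
    have st: "\<forall>i. Suc i < length [(0::real,0::real),(eps,eps)] \<longrightarrow>
        ([(0,0),(eps,eps)] ! Suc i = (fst ([(0,0),(eps,eps)] ! i) + eps, snd ([(0,0),(eps,eps)] ! i) + eps) \<or>
         [(0,0),(eps,eps)] ! Suc i = (fst ([(0,0),(eps,eps)] ! i) - eps, snd ([(0,0),(eps,eps)] ! i) + eps))"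
    proof (intro allI impI)
      fix i assume "Suc i < length [(0::real,0::real),(eps,eps)]"
      then have "i = 0" by simp
      then show "[(0,0),(eps,eps)] ! Suc i = (fst ([(0,0),(eps,eps)] ! i) + eps, snd ([(0,0),(eps,eps)] ! i) + eps) \<or>
         [(0,0),(eps,eps)] ! Suc i = (fst ([(0,0),(eps,eps)] ! i) - eps, snd ([(0,0),(eps,eps)] ! i) + eps)"
        by simp
    qed
    have cp: "checker_path eps [(0,0),(eps,eps)]" unfolding checker_path_def
    proof (intro conjI)
      show "[(0::real,0::real),(eps,eps)] \<noteq> []" by simp
      show "\<forall>p\<in>set [(0::real,0::real),(eps,eps)]. lattice_pt eps p" using l0 l1 by simp
    qed (fact st)
    have "hd [(0::real,0::real),(eps,eps)] = (0,0)" "[(0::real,0::real),(eps,eps)] ! 1 = (eps,eps)"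
      "last [(0::real,0::real),(eps,eps)] = (eps,eps)" "2 \<le> length [(0::real,0::real),(eps,eps)]" by simp_all
    then show ?thesis unfolding paths_to_def using cp by blast
  qed
  show ?thesis
  proof (cases "x = eps")
    case True
    have "paths_to eps x eps = {[(0,0),(eps,eps)]}"
    proof (intro set_eqI iffI)
      fix s assume "s \<in> paths_to eps x eps" then show "s \<in> {[(0,0),(eps,eps)]}" using P1 by blast
    next
      fix s assume "s \<in> {[(0,0),(eps,eps)]}" then show "s \<in> paths_to eps x eps" using P2 True by simp
    qed
    then show ?thesis using True by simp
  next
    case False
    have "paths_to eps x eps = {}" using P1 False by blast
    then show ?thesis using False by simp
  qed
qed

lemma paths_finite:
  assumes "eps > 0"
  shows "finite (paths_to eps x (real (Suc n) * eps))"
proof (induction n arbitrary: x)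
  case 0 then show ?case using paths_base[OF assms] by simp
next
  case (Suc n)
  have t: "real (Suc (Suc n)) * eps = real (Suc n) * eps + eps" by (simp add: algebra_simps)
  have le: "eps \<le> real (Suc n) * eps" using assms by simp
  have "paths_to eps x (real (Suc n) * eps + eps) =
     (\<lambda>s. s @ [(x, real (Suc n) * eps + eps)]) ` paths_to eps (x - eps) (real (Suc n) * eps) \<union>
     (\<lambda>s. s @ [(x, real (Suc n) * eps + eps)]) ` paths_to eps (x + eps) (real (Suc n) * eps)"
    using paths_split[OF assms le, of x] unfolding decompR[OF assms le] decompL[OF assms le] .
  then show ?case unfolding t using Suc.IH by (metis finite_UnI finite_imageI)
qed

definition SR :: "real \<Rightarrow> real \<Rightarrow> real \<Rightarrow> real \<Rightarrow> complex" where
  "SR m eps x t = (\<Sum>s\<in>{s \<in> paths_to eps x t. fst (s ! (length s - 2)) < x}.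
      (- \<i> * complex_of_real (m * eps)) ^ turns s)"

definition SL :: "real \<Rightarrow> real \<Rightarrow> real \<Rightarrow> real \<Rightarrow> complex" where
  "SL m eps x t = (\<Sum>s\<in>{s \<in> paths_to eps x t. fst (s ! (length s - 2)) > x}.
      (- \<i> * complex_of_real (m * eps)) ^ turns s)"

lemma prev_fst2:
  assumes "s \<in> paths_to eps y t"
  shows "fst (s ! (length s - 2)) = y - eps \<or> fst (s ! (length s - 2)) = y + eps"
proof -
  have cp: "checker_path eps s" and l: "2 \<le> length s" and la: "last s = (y,t)"
    using assms unfolding paths_to_def by auto
  have ne: "s \<noteq> []" using l by auto
  have lastn: "s ! (length s - 1) = (y,t)" using la ne by (simp add: last_conv_nth)
  have e2: "Suc (length s - 2) = length s - 1" using l by simp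
  have "Suc (length s - 2) < length s" using l by simp
  from cp_step[OF cp this] show ?thesis unfolding e2 lastn by auto
qed

lemma sum_split_paths:
  assumes "eps > 0" "finite (paths_to eps y t)"
  shows "(\<Sum>s\<in>paths_to eps y t. f s) =
    (\<Sum>s\<in>{s \<in> paths_to eps y t. fst (s ! (length s - 2)) < y}. f s) +
    (\<Sum>s\<in>{s \<in> paths_to eps y t. fst (s ! (length s - 2)) > y}. f s)"
proof -
  have U: "paths_to eps y t = {s \<in> paths_to eps y t. fst (s ! (length s - 2)) < y} \<union>
    {s \<in> paths_to eps y t. fst (s ! (length s - 2)) > y}"
    using prev_fst2[of _ eps y t] assms(1) by fastforce
  show ?thesis
    by (subst U, rule sum.union_disjoint) (use assms(2) in auto)
qed

lemma SR_rec:
  assumes e: "eps > 0" and le: "eps \<le> t" and fin: "finite (paths_to eps (x - eps) t)"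
  shows "SR m eps x (t + eps) = SR m eps (x - eps) t + (- \<i> * complex_of_real (m * eps)) * SL m eps (x - eps) t"
proof -
  let ?z = "- \<i> * complex_of_real (m * eps)"
  let ?P = "paths_to eps (x - eps) t"
  have inj: "inj_on (\<lambda>s. s @ [(x, t + eps)]) ?P" by (auto simp: inj_on_def)
  have "SR m eps x (t + eps) = (\<Sum>s\<in>?P. ?z ^ turns (s @ [(x, t + eps)]))"
    unfolding SR_def decompR[OF e le] by (simp add: sum.reindex[OF inj])
  also have "\<dots> = (\<Sum>s\<in>?P. ?z ^ (turns s + (if fst (s ! (length s - 2)) > x - eps then 1 else 0)))"
  proof (rule sum.cong[OF refl])
    fix s assume s: "s \<in> ?P"
    have cp: "checker_path eps s" and l: "2 \<le> length s" and la: "last s = (x - eps, t)"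
      using s unfolding paths_to_def by auto
    have "turns (s @ [(fst (last s) + eps, snd (last s) + eps)]) =
         turns s + (if fst (last s) - fst (s ! (length s - 2)) \<noteq> eps then 1 else 0)"
      by (rule turns_append[OF cp l e]) simp
    moreover have "(fst (last s) - fst (s ! (length s - 2)) \<noteq> eps) = (fst (s ! (length s - 2)) > x - eps)"
      using prev_fst2[OF s] la e by auto
    ultimately show "?z ^ turns (s @ [(x, t + eps)]) =
       ?z ^ (turns s + (if fst (s ! (length s - 2)) > x - eps then 1 else 0))"
      using la by simp
  qed
  also have "\<dots> = SR m eps (x - eps) t + ?z * SL m eps (x - eps) t"
    unfolding SR_def SL_def sum_split_paths[OF e fin]
    by (auto simp: sum_distrib_left intro!: sum.cong arg_cong2[where f="(+)"])
  finally show ?thesis .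
qed

lemma SL_rec:
  assumes e: "eps > 0" and le: "eps \<le> t" and fin: "finite (paths_to eps (x + eps) t)"
  shows "SL m eps x (t + eps) = SL m eps (x + eps) t + (- \<i> * complex_of_real (m * eps)) * SR m eps (x + eps) t"
proof -
  let ?z = "- \<i> * complex_of_real (m * eps)"
  let ?P = "paths_to eps (x + eps) t"
  have inj: "inj_on (\<lambda>s. s @ [(x, t + eps)]) ?P" by (auto simp: inj_on_def)
  have "SL m eps x (t + eps) = (\<Sum>s\<in>?P. ?z ^ turns (s @ [(x, t + eps)]))"
    unfolding SL_def decompL[OF e le] by (simp add: sum.reindex[OF inj])
  also have "\<dots> = (\<Sum>s\<in>?P. ?z ^ (turns s + (if fst (s ! (length s - 2)) < x + eps then 1 else 0)))"
  proof (rule sum.cong[OF refl])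
    fix s assume s: "s \<in> ?P"
    have cp: "checker_path eps s" and l: "2 \<le> length s" and la: "last s = (x + eps, t)"
      using s unfolding paths_to_def by auto
    have "turns (s @ [(fst (last s) + - eps, snd (last s) + eps)]) =
         turns s + (if fst (last s) - fst (s ! (length s - 2)) \<noteq> - eps then 1 else 0)"
      by (rule turns_append[OF cp l e]) simp
    moreover have "(fst (last s) - fst (s ! (length s - 2)) \<noteq> - eps) = (fst (s ! (length s - 2)) < x + eps)"
      using prev_fst2[OF s] la e by auto
    ultimately show "?z ^ turns (s @ [(x, t + eps)]) =
       ?z ^ (turns s + (if fst (s ! (length s - 2)) < x + eps then 1 else 0))"
      using la by simp
  qed
  also have "\<dots> = SL m eps (x + eps) t + ?z * SR m eps (x + eps) t"
    unfolding SR_def SL_def sum_split_paths[OF e fin]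
    by (auto simp: sum_distrib_left intro!: sum.cong arg_cong2[where f="(+)"])
  finally show ?thesis .
qed

primrec RL :: "real \<Rightarrow> nat \<Rightarrow> int \<Rightarrow> real \<times> real" where
  "RL mu 0 = (\<lambda>k. (if k = 1 then 1 else 0, 0))"
| "RL mu (Suc n) = (\<lambda>k. (fst (RL mu n (k - 1)) - mu * snd (RL mu n (k - 1)),
                         snd (RL mu n (k + 1)) + mu * fst (RL mu n (k + 1))))"

lemma turns_two: "turns [p, q] = 0"
proof -
  have E: "{i. is_turn [p, q] i} = {}" by (auto simp: is_turn_def)
  show ?thesis unfolding turns_def E by simp
qed

lemma SR_base: assumes "eps > 0" shows "SR m eps x eps = (if x = eps then 1 else 0)"
proof (cases "x = eps")
  case True
  have "{s \<in> paths_to eps x eps. fst (s ! (length s - 2)) < x} = {[(0,0),(eps,eps)]}"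
    using True assms by (auto simp: paths_base[OF assms])
  then show ?thesis unfolding SR_def using True by (simp add: turns_two)
next
  case False
  then show ?thesis unfolding SR_def by (simp add: paths_base[OF assms])
qed

lemma SL_base: assumes "eps > 0" shows "SL m eps x eps = 0"
proof -
  have E: "{s \<in> paths_to eps x eps. fst (s ! (length s - 2)) > x} = {}"
    using assms by (auto simp: paths_base[OF assms] split: if_splits)
  show ?thesis unfolding SL_def E by simp
qed

lemma S_RL:
  assumes e: "eps > 0"
  shows "SR m eps (of_int k * eps) (real (Suc n) * eps) = complex_of_real (fst (RL (m * eps) n k)) \<and>
         SL m eps (of_int k * eps) (real (Suc n) * eps) = - \<i> * complex_of_real (snd (RL (m * eps) n k))"
proof (induction n arbitrary: k)
  case 0
  have "(of_int k * eps = eps) \<longleftrightarrow> k = 1" using e by auto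
  then show ?case using SR_base[OF e] SL_base[OF e] by simp
next
  case (Suc n)
  have t: "real (Suc (Suc n)) * eps = real (Suc n) * eps + eps" by (simp add: algebra_simps)
  have le: "eps \<le> real (Suc n) * eps" using e by simp
  have x1: "of_int k * eps - eps = of_int (k - 1) * eps" by (simp add: algebra_simps)
  have x2: "of_int k * eps + eps = of_int (k + 1) * eps" by (simp add: algebra_simps)
  have f1: "finite (paths_to eps (of_int k * eps - eps) (real (Suc n) * eps))" by (rule paths_finite[OF e])
  have f2: "finite (paths_to eps (of_int k * eps + eps) (real (Suc n) * eps))" by (rule paths_finite[OF e])
  show ?case unfolding t SR_rec[OF e le f1] SL_rec[OF e le f2] x1 x2 Suc.IH[THEN conjunct1] Suc.IH[THEN conjunct2]
    by (simp add: algebra_simps)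
qed

definition LL :: "real \<Rightarrow> nat \<Rightarrow> int \<Rightarrow> real" where
  "LL mu n k = snd (RL mu n k)"

lemma LL_0: "LL mu 0 k = 0" unfolding LL_def by simp
lemma LL_1: "LL mu (Suc 0) k = (if k = 0 then mu else 0)" unfolding LL_def by simp

lemma LL_rec: "LL mu (Suc (Suc n)) k = LL mu (Suc n) (k + 1) + LL mu (Suc n) (k - 1) - (1 + mu\<^sup>2) * LL mu n k"
proof -
  have a: "LL mu (Suc (Suc n)) k = LL mu (Suc n) (k + 1) + mu * fst (RL mu (Suc n) (k + 1))"
    unfolding LL_def by simp
  have b: "fst (RL mu (Suc n) (k + 1)) = fst (RL mu n k) - mu * LL mu n k"
    unfolding LL_def by simp
  have c: "LL mu (Suc n) (k - 1) = LL mu n k + mu * fst (RL mu n k)"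
    unfolding LL_def by simp
  show ?thesis unfolding a b using c by (simp add: algebra_simps power2_eq_square)
qed

lemma LL_two_induct:
  assumes "P 0" "P (Suc 0)" "\<And>n. P n \<Longrightarrow> P (Suc n) \<Longrightarrow> P (Suc (Suc n))"
  shows "P n"
proof -
  have "P n \<and> P (Suc n)" by (induction n) (use assms in auto)
  then show ?thesis by simp
qed

lemma LL_supp: "\<bar>k\<bar> > int n \<Longrightarrow> LL mu n k = 0"
proof (induction n arbitrary: k rule: LL_two_induct)
  case 1 then show ?case by (simp add: LL_0)
next
  case 2 then show ?case by (simp add: LL_1)
next
  case (3 n)
  have "\<bar>k + 1\<bar> > int (Suc n)" "\<bar>k - 1\<bar> > int (Suc n)" "\<bar>k\<bar> > int n" using "3.prems" by auto
  then show ?case unfolding LL_rec using "3.IH" by simp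
qed

lemma LL_sym: "LL mu n (- k) = LL mu n k"
proof (induction n arbitrary: k rule: LL_two_induct)
  case 1 then show ?case by (simp add: LL_0)
next
  case 2 then show ?case by (simp add: LL_1)
next
  case (3 n)
  have "LL mu (Suc n) (- k + 1) = LL mu (Suc n) (k - 1)" using "3.IH"(2)[of "k - 1"] by simp
  moreover have "LL mu (Suc n) (- k - 1) = LL mu (Suc n) (k + 1)" using "3.IH"(2)[of "k + 1"] by simp
  ultimately show ?case unfolding LL_rec using "3.IH"(1)[of k] by simp
qed

lemma LL_mu0: "LL 0 n k = 0"
  by (induction n arbitrary: k rule: LL_two_induct) (simp_all add: LL_0 LL_1 LL_rec)

fun vv :: "real \<Rightarrow> real \<Rightarrow> nat \<Rightarrow> real" where
  "vv r p 0 = 0"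
| "vv r p (Suc 0) = 1"
| "vv r p (Suc (Suc n)) = 2 * cos p * vv r p (Suc n) - r * vv r p n"

lemma sum_shift_int:
  fixes f :: "int \<Rightarrow> real"
  shows "(\<Sum>k\<in>{lo..hi}. f (k + 1)) = (\<Sum>k\<in>{lo+1..hi+1}. f k)"
proof -
  have "(\<Sum>k\<in>{lo+1..hi+1}. f k) = (\<Sum>k\<in>(\<lambda>k. k + 1) ` {lo..hi}. f k)"
    by (simp add: image_add_atLeastAtMost[symmetric] add.commute)
  also have "\<dots> = (\<Sum>k\<in>{lo..hi}. f (k + 1))" by (subst sum.reindex) (auto simp: inj_on_def)
  finally show ?thesis by simp
qed

lemma sum_up:
  fixes f :: "int \<Rightarrow> real"
  assumes "M \<ge> 0" "f (- M) = 0" "f (M + 1) = 0"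
  shows "(\<Sum>k\<in>{- M + 1..M + 1}. f k) = (\<Sum>k\<in>{- M..M}. f k)"
proof -
  have e1: "{- M..M + 1} = insert (M + 1) {- M..M}" using assms(1) by auto
  have e2: "{- M..M + 1} = insert (- M) {- M + 1..M + 1}" using assms(1) by auto
  have "(\<Sum>k\<in>{- M..M + 1}. f k) = (\<Sum>k\<in>{- M..M}. f k)" unfolding e1 using assms(3) by simp
  moreover have "(\<Sum>k\<in>{- M..M + 1}. f k) = (\<Sum>k\<in>{- M + 1..M + 1}. f k)" unfolding e2 using assms(2) by simp
  ultimately show ?thesis by simp
qed

lemma sum_down:
  fixes f :: "int \<Rightarrow> real"
  assumes "M \<ge> 0" "f M = 0" "f (- M - 1) = 0"
  shows "(\<Sum>k\<in>{- M - 1..M - 1}. f k) = (\<Sum>k\<in>{- M..M}. f k)"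
proof -
  have e1: "{- M - 1..M} = insert (- M - 1) {- M..M}" using assms(1) by auto
  have e2: "{- M - 1..M} = insert M {- M - 1..M - 1}" using assms(1) by auto
  have "(\<Sum>k\<in>{- M - 1..M}. f k) = (\<Sum>k\<in>{- M..M}. f k)" unfolding e1 using assms(3) by simp
  moreover have "(\<Sum>k\<in>{- M - 1..M}. f k) = (\<Sum>k\<in>{- M - 1..M - 1}. f k)" unfolding e2 using assms(2) by simp
  ultimately show ?thesis by simp
qed

lemma cos_pm: "cos (x - y) + cos (x + y) = 2 * cos x * cos (y::real)"
  by (simp add: cos_add cos_diff)

lemma LL_cos:
  "int n \<le> M \<Longrightarrow> (\<Sum>k\<in>{- M..M}. LL mu n k * cos (of_int k * p)) = mu * vv (1 + mu\<^sup>2) p n"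
proof (induction n arbitrary: M rule: LL_two_induct)
  case 1 then show ?case by (simp add: LL_0)
next
  case 2
  have "(\<Sum>k\<in>{- M..M}. LL mu (Suc 0) k * cos (of_int k * p)) =
        (\<Sum>k\<in>{- M..M}. (if k = 0 then mu else 0))"
    by (rule sum.cong) (auto simp: LL_1)
  also have "\<dots> = mu" using "2.prems" by (simp add: sum.delta)
  finally show ?case by simp
next
  case (3 n)
  let ?L1 = "LL mu (Suc n)" and ?L0 = "LL mu n"
  have M0: "M \<ge> 0" using "3.prems" by simp
  have s1: "(\<Sum>k\<in>{- M..M}. ?L1 (k + 1) * cos (of_int k * p)) =
            (\<Sum>k\<in>{- M..M}. ?L1 k * cos (of_int (k - 1) * p))"
  proof -
    have "(\<Sum>k\<in>{- M..M}. ?L1 (k + 1) * cos (of_int k * p)) =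
          (\<Sum>k\<in>{- M..M}. (\<lambda>j. ?L1 j * cos (of_int (j - 1) * p)) (k + 1))" by simp
    also have "\<dots> = (\<Sum>k\<in>{- M + 1..M + 1}. ?L1 k * cos (of_int (k - 1) * p))"
      by (rule sum_shift_int)
    also have "\<dots> = (\<Sum>k\<in>{- M..M}. ?L1 k * cos (of_int (k - 1) * p))"
      by (rule sum_up[OF M0]) (use "3.prems" in \<open>simp_all add: LL_supp\<close>)
    finally show ?thesis .
  qed
  have s2: "(\<Sum>k\<in>{- M..M}. ?L1 (k - 1) * cos (of_int k * p)) =
            (\<Sum>k\<in>{- M..M}. ?L1 k * cos (of_int (k + 1) * p))"
  proof -
    have "(\<Sum>k\<in>{- M - 1..M - 1}. (\<lambda>j. ?L1 (j - 1) * cos (of_int j * p)) (k + 1)) =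
          (\<Sum>k\<in>{- M - 1 + 1..M - 1 + 1}. (\<lambda>j. ?L1 (j - 1) * cos (of_int j * p)) k)"
      by (rule sum_shift_int)
    then have "(\<Sum>k\<in>{- M..M}. ?L1 (k - 1) * cos (of_int k * p)) =
          (\<Sum>k\<in>{- M - 1..M - 1}. ?L1 k * cos (of_int (k + 1) * p))" by simp
    also have "\<dots> = (\<Sum>k\<in>{- M..M}. ?L1 k * cos (of_int (k + 1) * p))"
      by (rule sum_down[OF M0]) (use "3.prems" in \<open>simp_all add: LL_supp\<close>)
    finally show ?thesis .
  qed
  have "(\<Sum>k\<in>{- M..M}. LL mu (Suc (Suc n)) k * cos (of_int k * p)) =
        (\<Sum>k\<in>{- M..M}. ?L1 (k + 1) * cos (of_int k * p)) +
        (\<Sum>k\<in>{- M..M}. ?L1 (k - 1) * cos (of_int k * p)) -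
        (1 + mu\<^sup>2) * (\<Sum>k\<in>{- M..M}. ?L0 k * cos (of_int k * p))"
    unfolding LL_rec by (simp add: algebra_simps sum.distrib sum_subtractf sum_distrib_left)
  also have "(\<Sum>k\<in>{- M..M}. ?L1 (k + 1) * cos (of_int k * p)) +
        (\<Sum>k\<in>{- M..M}. ?L1 (k - 1) * cos (of_int k * p)) =
        (\<Sum>k\<in>{- M..M}. ?L1 k * (2 * cos p * cos (of_int k * p)))"
  proof -
    have "\<And>k. cos (of_int (k - 1) * p) + cos (of_int (k + 1) * p) = 2 * cos p * cos (of_int k * p)"
    proof -
      fix k
      have "cos (of_int k * p - p) + cos (of_int k * p + p) = 2 * cos (of_int k * p) * cos p" by (rule cos_pm)
      moreover have "of_int (k - 1) * p = of_int k * p - p" "of_int (k + 1) * p = of_int k * p + p"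
        by (simp_all add: algebra_simps)
      ultimately show "cos (of_int (k - 1) * p) + cos (of_int (k + 1) * p) = 2 * cos p * cos (of_int k * p)"
        by simp
    qed
    note cc = this
    show ?thesis unfolding s1 s2 sum.distrib[symmetric]
    proof (rule sum.cong[OF refl])
      fix k
      show "?L1 k * cos (of_int (k - 1) * p) + ?L1 k * cos (of_int (k + 1) * p) =
            ?L1 k * (2 * cos p * cos (of_int k * p))"
        using cc[of k] by (simp add: distrib_left[symmetric])
    qed
  qed
  also have "\<dots> = 2 * cos p * (\<Sum>k\<in>{- M..M}. ?L1 k * cos (of_int k * p))"
    by (simp add: sum_distrib_left algebra_simps)
  finally show ?case using "3.IH"[of M] "3.prems" by (simp add: algebra_simps)
qed

lemma sin_int_pi: "sin (of_int m * pi) = 0"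
  by (simp add: sin_times_pi_eq_0)

lemma cos_int_integral:
  "((\<lambda>p. cos (of_int m * p)) has_integral (if m = 0 then 2 * pi else 0)) {-pi..pi}"
proof (cases "m = 0")
  case True
  have "((\<lambda>p. 1::real) has_integral 2 * pi) {-pi..pi}"
    using has_integral_const_real[of "1::real" "-pi" pi] by simp
  then show ?thesis using True by simp
next
  case False
  have "((\<lambda>p. cos (of_int m * p)) has_integral (sin (of_int m * pi) / of_int m - sin (of_int m * (-pi)) / of_int m)) {-pi..pi}"
  proof (rule fundamental_theorem_of_calculus)
    show "- pi \<le> pi" by simp
    fix x assume "x \<in> {-pi..pi}"
    have "((\<lambda>p. sin (of_int m * p) / of_int m) has_real_derivative cos (of_int m * x)) (at x within {-pi..pi})"
      using False by (auto intro!: derivative_eq_intros)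
    then show "((\<lambda>p. sin (of_int m * p) / of_int m) has_vector_derivative cos (of_int m * x)) (at x within {-pi..pi})"
      by (simp add: has_real_derivative_iff_has_vector_derivative)
  qed
  moreover have "sin (of_int m * (-pi)) = 0" using sin_int_pi[of "-m"] by simp
  ultimately show ?thesis using False by (simp add: sin_int_pi)
qed

lemma cos_cos_integral:
  "((\<lambda>p. cos (of_int j * p) * cos (of_int k * p)) has_integral
      pi * ((if j = k then 1 else 0) + (if j = - k then 1 else 0))) {-pi..pi}"
proof -
  have e: "\<And>p::real. cos (of_int j * p) * cos (of_int k * p) =
     cos (of_int (j - k) * p) / 2 + cos (of_int (j + k) * p) / 2"
    by (simp add: cos_times_cos algebra_simps add_divide_distrib)
  have "((\<lambda>p. cos (of_int (j - k) * p) / 2 + cos (of_int (j + k) * p) / 2) has_integral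
     ((if j - k = 0 then 2 * pi else 0) / 2 + (if j + k = 0 then 2 * pi else 0) / 2)) {-pi..pi}"
    by (intro has_integral_add has_integral_divide cos_int_integral)
  then show ?thesis unfolding e by (auto simp: algebra_simps)
qed

lemma parseval_cos:
  fixes c :: "int \<Rightarrow> real"
  assumes sym: "\<And>k. c (- k) = c k" and M: "M \<ge> 0"
  shows "((\<lambda>p. (\<Sum>k\<in>{-M..M}. c k * cos (of_int k * p))\<^sup>2) has_integral
          (2 * pi * (\<Sum>k\<in>{-M..M}. (c k)\<^sup>2))) {-pi..pi}"
proof -
  have e: "\<And>p. (\<Sum>k\<in>{-M..M}. c k * cos (of_int k * p))\<^sup>2 =
     (\<Sum>j\<in>{-M..M}. \<Sum>k\<in>{-M..M}. c j * c k * (cos (of_int j * p) * cos (of_int k * p)))"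
    by (simp add: power2_eq_square sum_product algebra_simps)
  have "((\<lambda>p. \<Sum>j\<in>{-M..M}. \<Sum>k\<in>{-M..M}. c j * c k * (cos (of_int j * p) * cos (of_int k * p))) has_integral
     (\<Sum>j\<in>{-M..M}. \<Sum>k\<in>{-M..M}. c j * c k * (pi * ((if j = k then 1 else 0) + (if j = - k then 1 else 0))))) {-pi..pi}"
    by (intro has_integral_sum finite_atLeastAtMost_int has_integral_mult_right cos_cos_integral)
  moreover have "(\<Sum>j\<in>{-M..M}. \<Sum>k\<in>{-M..M}. c j * c k * (pi * ((if j = k then 1 else 0) + (if j = - k then 1 else 0))))
      = 2 * pi * (\<Sum>k\<in>{-M..M}. (c k)\<^sup>2)"
  proof -
    have "\<And>j. j \<in> {-M..M} \<Longrightarrow> (\<Sum>k\<in>{-M..M}. c j * c k * (pi * ((if j = k then 1 else 0) + (if j = - k then 1 else 0))))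
        = 2 * pi * (c j)\<^sup>2"
    proof -
      fix j assume j: "j \<in> {-M..M}"
      then have mj: "- j \<in> {-M..M}" by auto
      have "(\<Sum>k\<in>{-M..M}. c j * c k * (pi * ((if j = k then 1 else 0) + (if j = - k then 1 else 0))))
          = (\<Sum>k\<in>{-M..M}. (if k = j then c j * c k * pi else 0) + (if k = - j then c j * c k * pi else 0))"
        by (rule sum.cong) (auto simp: algebra_simps)
      also have "\<dots> = (\<Sum>k\<in>{-M..M}. (if k = j then c j * c k * pi else 0)) + (\<Sum>k\<in>{-M..M}. (if k = - j then c j * c k * pi else 0))"
        by (rule sum.distrib)
      also have "\<dots> = c j * c j * pi + c j * c (- j) * pi" using j mj by (simp add: sum.delta)
      also have "\<dots> = 2 * pi * (c j)\<^sup>2" using sym[of j] by (simp add: power2_eq_square)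
      finally show "(\<Sum>k\<in>{-M..M}. c j * c k * (pi * ((if j = k then 1 else 0) + (if j = - k then 1 else 0))))
        = 2 * pi * (c j)\<^sup>2" .
    qed
    then show ?thesis by (simp add: sum_distrib_left)
  qed
  ultimately show ?thesis unfolding e by simp
qed

lemma pos_comb:
  fixes k :: real assumes k: "k > 0" shows "(cos p)\<^sup>2 + k * (sin p)\<^sup>2 > 0"
proof (cases "sin p = 0")
  case True
  then have "(cos p)\<^sup>2 = 1" using sin_cos_squared_add[of p] by simp
  then show ?thesis using True by simp
next
  case False
  then have "k * (sin p)\<^sup>2 > 0" using k by simp
  then show ?thesis by (simp add: add_nonneg_pos)
qed

lemma alg_main:
  fixes s c k :: real
  assumes sc: "s\<^sup>2 + c\<^sup>2 = 1" and D: "c\<^sup>2 + k * s\<^sup>2 > 0" and D2: "c\<^sup>2 + k\<^sup>2 * s\<^sup>2 > 0"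
  shows "1 + inverse (1 + ((k - 1) * s * c / (c\<^sup>2 + k * s\<^sup>2))\<^sup>2) *
     ((((0 * s + c * 1 * (k - 1)) * c + - s * 1 * ((k - 1) * s)) * (c\<^sup>2 + k * s\<^sup>2) -
      (k - 1) * s * c * (real 2 * (- s * 1 * c ^ (2 - Suc 0)) + (0 * s\<^sup>2 + real 2 * (c * 1 * s ^ (2 - Suc 0)) * k))) /
     ((c\<^sup>2 + k * s\<^sup>2) * (c\<^sup>2 + k * s\<^sup>2))) = k / (c\<^sup>2 + k\<^sup>2 * s\<^sup>2)"
proof -
  define DD where "DD = c\<^sup>2 + k * s\<^sup>2"
  define D2 where "D2 = c\<^sup>2 + k\<^sup>2 * s\<^sup>2"
  define nm where "nm = (((0 * s + c * 1 * (k - 1)) * c + - s * 1 * ((k - 1) * s)) * (c\<^sup>2 + k * s\<^sup>2) -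
      (k - 1) * s * c * (real 2 * (- s * 1 * c ^ (2 - Suc 0)) + (0 * s\<^sup>2 + real 2 * (c * 1 * s ^ (2 - Suc 0)) * k)))"
  have nm_eq: "nm = (k - 1) * (c\<^sup>2 - s\<^sup>2) * DD - 2 * (k - 1)\<^sup>2 * s\<^sup>2 * c\<^sup>2"
    unfolding nm_def DD_def by (simp add: power2_eq_square algebra_simps)
  have DDp: "DD > 0" using D DD_def by simp
  have D2p: "D2 > 0" using D2 D2_def by simp
  have e1: "1 + ((k - 1) * s * c / DD)\<^sup>2 = (DD\<^sup>2 + ((k - 1) * s * c)\<^sup>2) / DD\<^sup>2"
    using DDp by (simp add: field_simps power2_eq_square)
  have e2: "DD\<^sup>2 + ((k - 1) * s * c)\<^sup>2 = D2"
    unfolding DD_def D2_def using sc by algebra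
  have e3: "D2 + nm = k" unfolding nm_eq DD_def D2_def using sc by algebra
  have "1 + inverse (1 + ((k - 1) * s * c / DD)\<^sup>2) * (nm / (DD * DD)) = 1 + nm / D2"
    unfolding e1 e2 using DDp D2p by (simp add: field_simps power2_eq_square)
  also have "\<dots> = k / D2" using e3 D2p by (simp add: field_simps)
  finally show ?thesis unfolding DD_def D2_def nm_def .
qed

lemma G_deriv:
  fixes k :: real
  assumes k: "k > 0"
  shows "((\<lambda>p. p + arctan ((k - 1) * sin p * cos p / ((cos p)\<^sup>2 + k * (sin p)\<^sup>2))) has_real_derivative
          k / ((cos p)\<^sup>2 + k\<^sup>2 * (sin p)\<^sup>2)) (at p)"
proof -
  have D: "(cos p)\<^sup>2 + k * (sin p)\<^sup>2 > 0" using pos_comb k by blast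
  have D2: "(cos p)\<^sup>2 + k\<^sup>2 * (sin p)\<^sup>2 > 0" using pos_comb[of "k\<^sup>2"] k by simp
  show ?thesis
    apply (rule DERIV_cong)
     apply (rule derivative_eq_intros refl)+
     apply (use D in simp)
     apply (rule refl)+
    apply (rule alg_main[OF sin_cos_squared_add D D2])
    done
qed

lemma int_g:
  fixes mu :: real
  assumes mu: "mu > 0"
  shows "((\<lambda>p. 1 / (mu\<^sup>2 + (sin p)\<^sup>2)) has_integral 2 * pi / (mu * sqrt (1 + mu\<^sup>2))) {-pi..pi}"
proof -
  define rho where "rho = sqrt (1 + mu\<^sup>2)"
  have rho: "rho > 0" "rho\<^sup>2 = 1 + mu\<^sup>2" unfolding rho_def by (simp_all add: add_pos_nonneg)
  define k where "k = rho / mu"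
  have k: "k > 0" using rho mu k_def by simp
  define G where "G = (\<lambda>p. p + arctan ((k - 1) * sin p * cos p / ((cos p)\<^sup>2 + k * (sin p)\<^sup>2)))"
  have eq: "k / ((cos p)\<^sup>2 + k\<^sup>2 * (sin p)\<^sup>2) = (mu * rho) * (1 / (mu\<^sup>2 + (sin p)\<^sup>2))" for p
  proof -
    have den: "mu\<^sup>2 + (sin p)\<^sup>2 > 0" using mu by (simp add: add_pos_nonneg)
    have "(cos p)\<^sup>2 + k\<^sup>2 * (sin p)\<^sup>2 = (mu\<^sup>2 * (cos p)\<^sup>2 + rho\<^sup>2 * (sin p)\<^sup>2) / mu\<^sup>2"
      unfolding k_def using mu by (simp add: field_simps power2_eq_square)
    also have "mu\<^sup>2 * (cos p)\<^sup>2 + rho\<^sup>2 * (sin p)\<^sup>2 = mu\<^sup>2 + (sin p)\<^sup>2"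
      unfolding rho(2) using sin_cos_squared_add[of p] by algebra
    finally have X: "(cos p)\<^sup>2 + k\<^sup>2 * (sin p)\<^sup>2 = (mu\<^sup>2 + (sin p)\<^sup>2) / mu\<^sup>2" .
    have "k / ((cos p)\<^sup>2 + k\<^sup>2 * (sin p)\<^sup>2) = k / ((mu\<^sup>2 + (sin p)\<^sup>2) / mu\<^sup>2)" unfolding X ..
    also have "\<dots> = k * mu\<^sup>2 / (mu\<^sup>2 + (sin p)\<^sup>2)" by simp
    also have "\<dots> = (mu * rho) * (1 / (mu\<^sup>2 + (sin p)\<^sup>2))" unfolding k_def using mu
      by (simp add: power2_eq_square)
    finally show ?thesis .
  qed
  have "((\<lambda>p. (mu * rho) * (1 / (mu\<^sup>2 + (sin p)\<^sup>2))) has_integral (G pi - G (-pi))) {-pi..pi}"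
  proof (rule fundamental_theorem_of_calculus)
    show "- pi \<le> pi" by simp
    fix x assume "x \<in> {-pi..pi}"
    have "(G has_real_derivative (mu * rho) * (1 / (mu\<^sup>2 + (sin x)\<^sup>2))) (at x)"
      using G_deriv[OF k, of x] unfolding G_def eq .
    then show "(G has_vector_derivative (mu * rho) * (1 / (mu\<^sup>2 + (sin x)\<^sup>2))) (at x within {-pi..pi})"
      by (simp add: has_real_derivative_iff_has_vector_derivative has_vector_derivative_at_within)
  qed
  moreover have "G pi - G (-pi) = 2 * pi" unfolding G_def by simp
  ultimately have "((\<lambda>p. (mu * rho) * (1 / (mu\<^sup>2 + (sin p)\<^sup>2))) has_integral 2 * pi) {-pi..pi}" by simp
  then have "((\<lambda>p. (1 / (mu * rho)) * ((mu * rho) * (1 / (mu\<^sup>2 + (sin p)\<^sup>2)))) has_integral (1 / (mu * rho)) * (2 * pi)) {-pi..pi}"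
    by (rule has_integral_mult_right)
  then show ?thesis using mu rho unfolding rho_def[symmetric] by simp
qed

lemma omega_deriv:
  fixes c0 :: real
  assumes c0: "0 < c0" "c0 < 1"
  shows "((\<lambda>p. arccos (c0 * cos p)) has_real_derivative c0 * sin p / sqrt (1 - (c0 * cos p)\<^sup>2)) (at p)"
proof -
  have b: "\<bar>c0 * cos p\<bar> < 1"
  proof -
    have "\<bar>c0 * cos p\<bar> = c0 * \<bar>cos p\<bar>" using c0 by (simp add: abs_mult)
    also have "\<dots> \<le> c0 * 1" using c0 by (intro mult_left_mono) auto
    finally show ?thesis using c0 by simp
  qed
  have "((\<lambda>p. arccos (c0 * cos p)) has_real_derivative
        inverse (- sqrt (1 - (c0 * cos p)\<^sup>2)) * (c0 * - sin p)) (at p)"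
    by (rule DERIV_chain2[OF DERIV_arccos]) (use b in \<open>auto intro!: derivative_eq_intros\<close>)
  moreover have "inverse (- sqrt (1 - (c0 * cos p)\<^sup>2)) * (c0 * - sin p) = c0 * sin p / sqrt (1 - (c0 * cos p)\<^sup>2)"
    by (simp add: field_simps)
  ultimately show ?thesis by simp
qed

lemma c0_bound:
  fixes c0 :: real assumes c0: "0 < c0" "c0 < 1"
  shows "(c0 * cos p)\<^sup>2 < 1"
proof -
  have "\<bar>c0 * cos p\<bar> = c0 * \<bar>cos p\<bar>" using c0 by (simp add: abs_mult)
  also have "\<dots> \<le> c0 * 1" using c0 by (intro mult_left_mono) auto
  finally have "\<bar>c0 * cos p\<bar> < 1" using c0 by simp
  then show ?thesis by (simp add: abs_square_less_1)
qed

lemma W_deriv: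
  fixes c0 :: real assumes c0: "0 < c0" "c0 < 1"
  shows "((\<lambda>p. sqrt (1 - (c0 * cos p)\<^sup>2)) has_real_derivative
          inverse (sqrt (1 - (c0 * cos p)\<^sup>2)) / 2 * (2 * c0\<^sup>2 * cos p * sin p)) (at p)"
proof -
  have pos: "0 < 1 - (c0 * cos p)\<^sup>2" using c0_bound[OF c0] by simp
  have "((\<lambda>p. 1 - (c0 * cos p)\<^sup>2) has_real_derivative 2 * c0\<^sup>2 * cos p * sin p) (at p)"
    apply (rule DERIV_cong)
     apply (rule derivative_eq_intros refl)+
    apply (simp add: power2_eq_square algebra_simps)
    done
  then show ?thesis
    by (rule DERIV_chain2[where f=sqrt and g="\<lambda>p. 1 - (c0 * cos p)\<^sup>2", OF DERIV_real_sqrt[OF pos]])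
qed

lemma U_deriv:
  fixes c0 mu :: real
  shows "((\<lambda>p. c0 * sin p * (mu\<^sup>2 + (sin p)\<^sup>2)) has_real_derivative
          c0 * cos p * (mu\<^sup>2 + 3 * (sin p)\<^sup>2)) (at p)"
  apply (rule DERIV_cong)
   apply (rule derivative_eq_intros refl)+
  apply (simp add: power2_eq_square algebra_simps)
  done

definition qf :: "real \<Rightarrow> real \<Rightarrow> real \<Rightarrow> real" where
  "qf c0 mu p = sqrt (1 - (c0 * cos p)\<^sup>2) / (c0 * sin p * (mu\<^sup>2 + (sin p)\<^sup>2))"

definition qf' :: "real \<Rightarrow> real \<Rightarrow> real \<Rightarrow> real" where
  "qf' c0 mu p = ((inverse (sqrt (1 - (c0 * cos p)\<^sup>2)) / 2 * (2 * c0\<^sup>2 * cos p * sin p)) *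
      (c0 * sin p * (mu\<^sup>2 + (sin p)\<^sup>2)) -
     sqrt (1 - (c0 * cos p)\<^sup>2) * (c0 * cos p * (mu\<^sup>2 + 3 * (sin p)\<^sup>2))) /
     ((c0 * sin p * (mu\<^sup>2 + (sin p)\<^sup>2)) * (c0 * sin p * (mu\<^sup>2 + (sin p)\<^sup>2)))"

lemma q_deriv:
  fixes c0 mu :: real
  assumes c0: "0 < c0" "c0 < 1" and mu: "mu > 0" and sp: "sin p \<noteq> 0"
  shows "(qf c0 mu has_real_derivative qf' c0 mu p) (at p)"
proof -
  have den: "mu\<^sup>2 + (sin p)\<^sup>2 > 0" using mu by (simp add: add_pos_nonneg)
  have "c0 * sin p * (mu\<^sup>2 + (sin p)\<^sup>2) \<noteq> 0" using c0 sp den by simp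
  from DERIV_divide[OF W_deriv[OF c0] U_deriv this]
  show ?thesis unfolding qf_def[abs_def] qf'_def .
qed

lemma continuous_qf':
  fixes c0 mu :: real
  assumes c0: "0 < c0" "c0 < 1" and mu: "mu > 0" and sp: "\<forall>p\<in>S. sin p \<noteq> 0"
  shows "continuous_on S (qf' c0 mu)"
proof -
  have den: "\<And>p. mu\<^sup>2 + (sin p)\<^sup>2 > 0" using mu by (simp add: add_pos_nonneg)
  have W: "\<And>p. sqrt (1 - (c0 * cos p)\<^sup>2) > 0" using c0_bound[OF c0] by simp
  show ?thesis unfolding qf'_def
    by (intro continuous_intros) (use sp den W c0 in \<open>auto simp: less_imp_neq[symmetric]\<close>)
qed

lemma cancel_aux:
  fixes x w y :: real assumes "w \<noteq> 0" "x \<noteq> 0"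
  shows "x * w / (w * (x * y)) = 1 / y"
  using assms by simp

lemma eq_aux:
  fixes A B q q' S N den :: real
  assumes "B * q = 1 / den"
  shows "A * (N * B) * q + q' * S = N * (A / den) + S * q'"
proof -
  have "A * (N * B) * q = N * (A * (B * q))" by (simp only: mult_ac)
  also have "\<dots> = N * (A / den)" unfolding assms by simp
  finally show ?thesis by (simp add: mult.commute)
qed

lemma phi_deriv:
  fixes c0 mu :: real
  assumes c0: "0 < c0" "c0 < 1" and mu: "mu > 0" and sp: "sin p \<noteq> 0"
  shows "((\<lambda>p. sin (2 * real n * arccos (c0 * cos p)) * qf c0 mu p) has_real_derivative
     (2 * real n * (cos (2 * real n * arccos (c0 * cos p)) / (mu\<^sup>2 + (sin p)\<^sup>2)) +
      sin (2 * real n * arccos (c0 * cos p)) * qf' c0 mu p)) (at p)"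
proof -
  have W: "sqrt (1 - (c0 * cos p)\<^sup>2) > 0" using c0_bound[OF c0] by simp
  have den: "mu\<^sup>2 + (sin p)\<^sup>2 > 0" using mu by (simp add: add_pos_nonneg)
  have d0: "((\<lambda>p. 2 * real n * arccos (c0 * cos p)) has_real_derivative
      2 * real n * (c0 * sin p / sqrt (1 - (c0 * cos p)\<^sup>2))) (at p)"
    by (rule DERIV_cmult[OF omega_deriv[OF c0]])
  have d1: "((\<lambda>p. sin (2 * real n * arccos (c0 * cos p))) has_real_derivative
      cos (2 * real n * arccos (c0 * cos p)) * (2 * real n * (c0 * sin p / sqrt (1 - (c0 * cos p)\<^sup>2)))) (at p)"
    by (rule DERIV_chain2[where f=sin, OF DERIV_sin d0])
  have key: "(c0 * sin p / sqrt (1 - (c0 * cos p)\<^sup>2)) * qf c0 mu p = 1 / (mu\<^sup>2 + (sin p)\<^sup>2)"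
  proof -
    have nz: "c0 * sin p * (mu\<^sup>2 + (sin p)\<^sup>2) \<noteq> 0" using den sp c0 by simp
    have "(c0 * sin p / sqrt (1 - (c0 * cos p)\<^sup>2)) * qf c0 mu p =
      (c0 * sin p * sqrt (1 - (c0 * cos p)\<^sup>2)) / (sqrt (1 - (c0 * cos p)\<^sup>2) * (c0 * sin p * (mu\<^sup>2 + (sin p)\<^sup>2)))"
      unfolding qf_def by (rule times_divide_times_eq)
    also have "\<dots> = 1 / (mu\<^sup>2 + (sin p)\<^sup>2)"
      by (rule cancel_aux) (use W sp c0 in auto)
    finally show ?thesis .
  qed
  show ?thesis
  proof (rule DERIV_cong[OF DERIV_mult[OF d1 q_deriv[OF c0 mu sp]]])
    show "cos (2 * real n * arccos (c0 * cos p)) * (2 * real n * (c0 * sin p / sqrt (1 - (c0 * cos p)\<^sup>2))) * qf c0 mu p +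
      qf' c0 mu p * sin (2 * real n * arccos (c0 * cos p)) =
      2 * real n * (cos (2 * real n * arccos (c0 * cos p)) / (mu\<^sup>2 + (sin p)\<^sup>2)) +
      sin (2 * real n * arccos (c0 * cos p)) * qf' c0 mu p"
      by (rule eq_aux[OF key])
  qed
qed

definition hh :: "real \<Rightarrow> real \<Rightarrow> nat \<Rightarrow> real \<Rightarrow> real" where
  "hh c0 mu n p = cos (2 * real n * arccos (c0 * cos p)) / (mu\<^sup>2 + (sin p)\<^sup>2)"

lemma hh_cont:
  fixes c0 mu :: real assumes c0: "0 < c0" "c0 < 1" and mu: "mu > 0"
  shows "continuous_on S (hh c0 mu n)"
proof -
  have den: "\<And>p. mu\<^sup>2 + (sin p)\<^sup>2 > 0" using mu by (simp add: add_pos_nonneg)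
  have b: "\<And>p. - 1 \<le> c0 * cos p \<and> c0 * cos p \<le> 1"
  proof -
    fix p
    have "(c0 * cos p)\<^sup>2 < 1" by (rule c0_bound[OF c0])
    then have "\<bar>c0 * cos p\<bar> < 1" by (simp add: abs_square_less_1)
    then show "- 1 \<le> c0 * cos p \<and> c0 * cos p \<le> 1" by auto
  qed
  show ?thesis unfolding hh_def[abs_def]
    by (intro continuous_intros continuous_on_arccos) (use den b in \<open>auto simp: less_imp_neq[symmetric]\<close>)
qed

lemma hh_bound:
  fixes c0 mu :: real assumes mu: "mu > 0"
  shows "\<bar>hh c0 mu n p\<bar> \<le> 1 / mu\<^sup>2"
proof -
  have den: "mu\<^sup>2 + (sin p)\<^sup>2 \<ge> mu\<^sup>2" by simp
  have m2: "mu\<^sup>2 > 0" using mu by simp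
  have "\<bar>hh c0 mu n p\<bar> = \<bar>cos (2 * real n * arccos (c0 * cos p))\<bar> / (mu\<^sup>2 + (sin p)\<^sup>2)"
    unfolding hh_def using m2 by (simp add: abs_divide add_pos_nonneg)
  also have "\<dots> \<le> 1 / (mu\<^sup>2 + (sin p)\<^sup>2)"
    using m2 by (intro divide_right_mono) (auto simp: add_pos_nonneg)
  also have "\<dots> \<le> 1 / mu\<^sup>2" using m2 den
    by (intro divide_left_mono) (auto intro!: mult_pos_pos add_pos_nonneg)
  finally show ?thesis .
qed

lemma small_piece:
  fixes c0 mu :: real assumes c0: "0 < c0" "c0 < 1" and mu: "mu > 0" and lh: "lo \<le> hi"
  shows "\<bar>integral {lo..hi} (hh c0 mu n)\<bar> \<le> (hi - lo) / mu\<^sup>2"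
proof -
  have int: "(hh c0 mu n has_integral integral {lo..hi} (hh c0 mu n)) {lo..hi}"
    using integrable_continuous_interval[OF hh_cont[OF c0 mu]] by (rule integrable_integral)
  show ?thesis
    using has_integral_bound_real[where S="{}", OF _ _ int, of "1 / mu\<^sup>2"] hh_bound[OF mu] lh by simp
qed

lemma big_piece:
  fixes c0 mu :: real assumes c0: "0 < c0" "c0 < 1" and mu: "mu > 0" and lh: "lo \<le> hi"
    and sp: "\<forall>p\<in>{lo..hi}. sin p \<noteq> 0"
  shows "\<exists>C. \<forall>n. n \<ge> 1 \<longrightarrow> \<bar>integral {lo..hi} (hh c0 mu n)\<bar> \<le> C / real n"
proof -
  have cq: "continuous_on {lo..hi} (qf' c0 mu)" by (rule continuous_qf'[OF c0 mu sp])
  have "bounded (qf' c0 mu ` {lo..hi})"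
    by (rule compact_imp_bounded[OF compact_continuous_image[OF cq compact_Icc]])
  then obtain B where B: "B > 0" "\<And>p. p \<in> {lo..hi} \<Longrightarrow> \<bar>qf' c0 mu p\<bar> \<le> B"
    unfolding bounded_pos by auto
  define C where "C = (\<bar>qf c0 mu hi\<bar> + \<bar>qf c0 mu lo\<bar> + B * (hi - lo)) / 2"
  show ?thesis
  proof (intro exI[of _ C] allI impI)
    fix n :: nat assume n: "n \<ge> 1"
    define Phi where "Phi = (\<lambda>p. sin (2 * real n * arccos (c0 * cos p)) * qf c0 mu p)"
    define sq where "sq = (\<lambda>p. sin (2 * real n * arccos (c0 * cos p)) * qf' c0 mu p)"
    have ftc: "((\<lambda>p. 2 * real n * hh c0 mu n p + sq p) has_integral (Phi hi - Phi lo)) {lo..hi}"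
    proof (rule fundamental_theorem_of_calculus[OF lh])
      fix x assume x: "x \<in> {lo..hi}"
      have "(Phi has_real_derivative 2 * real n * hh c0 mu n x + sq x) (at x)"
        unfolding Phi_def sq_def hh_def using phi_deriv[OF c0 mu] sp x by blast
      then show "(Phi has_vector_derivative 2 * real n * hh c0 mu n x + sq x) (at x within {lo..hi})"
        by (simp add: has_real_derivative_iff_has_vector_derivative has_vector_derivative_at_within)
    qed
    have csq: "continuous_on {lo..hi} sq" unfolding sq_def
    proof (intro continuous_intros cq continuous_on_arccos)
      show "\<forall>x\<in>{lo..hi}. - 1 \<le> c0 * cos x \<and> c0 * cos x \<le> 1"
      proof
        fix p :: real
        have "(c0 * cos p)\<^sup>2 < 1" by (rule c0_bound[OF c0])
        then have "\<bar>c0 * cos p\<bar> < 1" by (simp add: abs_square_less_1)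
        then show "- 1 \<le> c0 * cos p \<and> c0 * cos p \<le> 1" by auto
      qed
    qed
    have ih: "(hh c0 mu n has_integral integral {lo..hi} (hh c0 mu n)) {lo..hi}"
      using integrable_continuous_interval[OF hh_cont[OF c0 mu]] by (rule integrable_integral)
    have iS: "(sq has_integral integral {lo..hi} sq) {lo..hi}"
      using integrable_continuous_interval[OF csq] by (rule integrable_integral)
    have "((\<lambda>p. 2 * real n * hh c0 mu n p + sq p) has_integral
        (2 * real n * integral {lo..hi} (hh c0 mu n) + integral {lo..hi} sq)) {lo..hi}"
      by (intro has_integral_add has_integral_mult_right ih iS)
    then have E: "2 * real n * integral {lo..hi} (hh c0 mu n) + integral {lo..hi} sq = Phi hi - Phi lo"
      using ftc by (rule has_integral_unique)
    have bsq: "\<bar>integral {lo..hi} sq\<bar> \<le> B * (hi - lo)"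
    proof -
      have "\<And>p. p \<in> {lo..hi} \<Longrightarrow> \<bar>sq p\<bar> \<le> B"
      proof -
        fix p assume p: "p \<in> {lo..hi}"
        have "\<bar>sq p\<bar> = \<bar>sin (2 * real n * arccos (c0 * cos p))\<bar> * \<bar>qf' c0 mu p\<bar>"
          unfolding sq_def by (simp add: abs_mult)
        also have "\<dots> \<le> 1 * B" using B(2)[OF p] by (intro mult_mono) auto
        finally show "\<bar>sq p\<bar> \<le> B" by simp
      qed
      then show ?thesis
        using has_integral_bound_real[where S="{}", OF _ _ iS, of B] B lh by simp
    qed
    have bphi: "\<And>p. \<bar>Phi p\<bar> \<le> \<bar>qf c0 mu p\<bar>"
    proof -
      fix p
      have "\<bar>Phi p\<bar> = \<bar>sin (2 * real n * arccos (c0 * cos p))\<bar> * \<bar>qf c0 mu p\<bar>"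
        unfolding Phi_def by (simp add: abs_mult)
      also have "\<dots> \<le> 1 * \<bar>qf c0 mu p\<bar>" by (intro mult_right_mono) auto
      finally show "\<bar>Phi p\<bar> \<le> \<bar>qf c0 mu p\<bar>" by simp
    qed
    have "2 * real n * \<bar>integral {lo..hi} (hh c0 mu n)\<bar> = \<bar>Phi hi - Phi lo - integral {lo..hi} sq\<bar>"
    proof -
      have "Phi hi - Phi lo - integral {lo..hi} sq = 2 * real n * integral {lo..hi} (hh c0 mu n)"
        using E by linarith
      then show ?thesis by (simp add: abs_mult)
    qed
    also have "\<dots> \<le> \<bar>qf c0 mu hi\<bar> + \<bar>qf c0 mu lo\<bar> + B * (hi - lo)"
      using bphi[of hi] bphi[of lo] bsq by linarith
    finally have "2 * real n * \<bar>integral {lo..hi} (hh c0 mu n)\<bar> \<le> 2 * C" unfolding C_def by simp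
    then show "\<bar>integral {lo..hi} (hh c0 mu n)\<bar> \<le> C / real n"
      using n by (simp add: field_simps)
  qed
qed

lemma hh_integrable:
  fixes c0 mu :: real assumes c0: "0 < c0" "c0 < 1" and mu: "mu > 0"
  shows "hh c0 mu n integrable_on {lo..hi}"
  by (rule integrable_continuous_interval[OF hh_cont[OF c0 mu]])

lemma split5:
  fixes f :: "real \<Rightarrow> real"
  assumes "\<And>lo hi. f integrable_on {lo..hi}"
    and "u0 \<le> u1" "u1 \<le> u2" "u2 \<le> u3" "u3 \<le> u4" "u4 \<le> u5"
  shows "integral {u0..u5} f = integral {u0..u1} f + integral {u1..u2} f + integral {u2..u3} f +
     integral {u3..u4} f + integral {u4..u5} f"
proof -
  have "integral {u0..u5} f = integral {u0..u4} f + integral {u4..u5} f"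
    by (rule Henstock_Kurzweil_Integration.integral_combine[symmetric]) (use assms in auto)
  moreover have "integral {u0..u4} f = integral {u0..u3} f + integral {u3..u4} f"
    by (rule Henstock_Kurzweil_Integration.integral_combine[symmetric]) (use assms in auto)
  moreover have "integral {u0..u3} f = integral {u0..u2} f + integral {u2..u3} f"
    by (rule Henstock_Kurzweil_Integration.integral_combine[symmetric]) (use assms in auto)
  moreover have "integral {u0..u2} f = integral {u0..u1} f + integral {u1..u2} f"
    by (rule Henstock_Kurzweil_Integration.integral_combine[symmetric]) (use assms in auto)
  ultimately show ?thesis by simp
qed

lemma decay:
  fixes c0 mu :: real assumes c0: "0 < c0" "c0 < 1" and mu: "mu > 0"
  shows "(\<lambda>n. integral {-pi..pi} (hh c0 mu n)) \<longlonglongrightarrow> 0"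
proof (rule LIMSEQ_I)
  fix r :: real assume r: "r > 0"
  have m2: "mu\<^sup>2 > 0" using mu by simp
  define d where "d = min 1 (r * mu\<^sup>2 / 8)"
  have d: "0 < d" "d \<le> 1" "d \<le> r * mu\<^sup>2 / 8" unfolding d_def using r m2 by auto
  have pi2: "1 < pi / 2" using pi_gt3 by simp
  have sp1: "\<forall>p\<in>{-pi + d..-d}. sin p \<noteq> 0"
  proof
    fix p assume p: "p \<in> {-pi + d..-d}"
    have "0 < sin (- p)" using p d by (intro sin_gt_zero) auto
    then show "sin p \<noteq> 0" by simp
  qed
  have sp2: "\<forall>p\<in>{d..pi - d}. sin p \<noteq> 0"
  proof
    fix p assume p: "p \<in> {d..pi - d}"
    have "0 < sin p" using p d by (intro sin_gt_zero) auto
    then show "sin p \<noteq> 0" by simp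
  qed
  have l1: "-pi + d \<le> -d" "d \<le> pi - d" using d pi2 by auto
  obtain C1 where C1: "\<And>n. n \<ge> 1 \<Longrightarrow> \<bar>integral {-pi + d..-d} (hh c0 mu n)\<bar> \<le> C1 / real n"
    using big_piece[OF c0 mu l1(1) sp1] by blast
  obtain C2 where C2: "\<And>n. n \<ge> 1 \<Longrightarrow> \<bar>integral {d..pi - d} (hh c0 mu n)\<bar> \<le> C2 / real n"
    using big_piece[OF c0 mu l1(2) sp2] by blast
  obtain N :: nat where N: "2 * (\<bar>C1\<bar> + \<bar>C2\<bar>) / r < real N" using reals_Archimedean2 by blast
  show "\<exists>no. \<forall>n\<ge>no. norm (integral {-pi..pi} (hh c0 mu n) - 0) < r"
  proof (intro exI[of _ "Suc N"] allI impI)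
    fix n assume n: "n \<ge> Suc N"
    then have n1: "n \<ge> 1" by simp
    have nN: "real n > real N" using n by simp
    have npos: "real n > 0" using n1 by simp
    have S: "integral {-pi..pi} (hh c0 mu n) = integral {-pi..-pi + d} (hh c0 mu n) + integral {-pi + d..-d} (hh c0 mu n) +
       integral {-d..d} (hh c0 mu n) + integral {d..pi - d} (hh c0 mu n) + integral {pi - d..pi} (hh c0 mu n)"
      by (rule split5[OF hh_integrable[OF c0 mu]]) (use d pi2 in auto)
    have s1: "\<bar>integral {-pi..-pi + d} (hh c0 mu n)\<bar> \<le> d / mu\<^sup>2"
      using small_piece[OF c0 mu, of "-pi" "-pi + d" n] d by simp
    have s2: "\<bar>integral {-d..d} (hh c0 mu n)\<bar> \<le> 2 * d / mu\<^sup>2"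
      using small_piece[OF c0 mu, of "-d" "d" n] d by simp
    have s3: "\<bar>integral {pi - d..pi} (hh c0 mu n)\<bar> \<le> d / mu\<^sup>2"
      using small_piece[OF c0 mu, of "pi - d" "pi" n] d by simp
    have small: "d / mu\<^sup>2 + 2 * d / mu\<^sup>2 + d / mu\<^sup>2 \<le> r / 2"
    proof -
      have "d / mu\<^sup>2 + 2 * d / mu\<^sup>2 + d / mu\<^sup>2 = 4 * d / mu\<^sup>2" by (simp add: field_simps)
      also have "\<dots> \<le> 4 * (r * mu\<^sup>2 / 8) / mu\<^sup>2" using d m2 by (intro divide_right_mono) auto
      also have "\<dots> = r / 2" using m2 by (simp add: field_simps)
      finally show ?thesis .
    qed
    have big: "C1 / real n + C2 / real n < r / 2"
    proof -
      have "C1 / real n + C2 / real n \<le> (\<bar>C1\<bar> + \<bar>C2\<bar>) / real n"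
        using npos by (simp add: add_divide_distrib[symmetric] divide_right_mono)
      also have "\<dots> \<le> (\<bar>C1\<bar> + \<bar>C2\<bar>) / real N"
      proof (cases "N = 0")
        case True
        then have "\<bar>C1\<bar> + \<bar>C2\<bar> < 0 \<or> \<bar>C1\<bar> + \<bar>C2\<bar> = 0" using N r
          by (simp add: divide_less_0_iff)
        then have "\<bar>C1\<bar> + \<bar>C2\<bar> = 0" by linarith
        then have "C1 = 0" "C2 = 0" by auto
        then show ?thesis by simp
      next
        case False
        then show ?thesis using nN by (intro divide_left_mono) auto
      qed
      also have "\<dots> < r / 2"
      proof (cases "N = 0")
        case True
        then show ?thesis using r by simp
      next
        case False
        then have "real N > 0" by simp
        then show ?thesis using N r by (simp add: field_simps)
      qed
      finally show ?thesis .
    qed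
    have "\<bar>integral {-pi..pi} (hh c0 mu n)\<bar> \<le> d / mu\<^sup>2 + C1 / real n + 2 * d / mu\<^sup>2 + C2 / real n + d / mu\<^sup>2"
      unfolding S using s1 s2 s3 C1[OF n1] C2[OF n1] by linarith
    then have "\<bar>integral {-pi..pi} (hh c0 mu n)\<bar> < r" using small big by linarith
    then show "norm (integral {-pi..pi} (hh c0 mu n) - 0) < r" by simp
  qed
qed

lemma vv_sin:
  fixes rho w p :: real
  assumes rho: "rho > 0" and cw: "cos p = rho * cos w"
  shows "rho * vv (rho\<^sup>2) p n * sin w = rho ^ n * sin (real n * w)"
proof (induction n rule: LL_two_induct)
  case 1 then show ?case by simp
next
  case 2 then show ?case by simp
next
  case (3 n)
  have tr: "sin (real (Suc (Suc n)) * w) = 2 * cos w * sin (real (Suc n) * w) - sin (real n * w)"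
  proof -
    have "sin (real (Suc n) * w + w) + sin (real (Suc n) * w - w) = 2 * sin (real (Suc n) * w) * cos w"
      by (simp add: sin_add sin_diff)
    moreover have "real (Suc n) * w + w = real (Suc (Suc n)) * w" "real (Suc n) * w - w = real n * w"
      by (simp_all add: algebra_simps)
    ultimately show ?thesis by (simp add: algebra_simps)
  qed
  have "rho * vv (rho\<^sup>2) p (Suc (Suc n)) * sin w =
      2 * cos p * (rho * vv (rho\<^sup>2) p (Suc n) * sin w) - rho\<^sup>2 * (rho * vv (rho\<^sup>2) p n * sin w)"
    by (simp add: algebra_simps)
  also have "\<dots> = 2 * (rho * cos w) * rho ^ Suc n * sin (real (Suc n) * w) - rho\<^sup>2 * rho ^ n * sin (real n * w)"
    using "3.IH" cw by simp
  also have "\<dots> = rho ^ Suc (Suc n) * (2 * cos w * sin (real (Suc n) * w) - sin (real n * w))"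
    by (simp add: algebra_simps power2_eq_square)
  also have "\<dots> = rho ^ Suc (Suc n) * sin (real (Suc (Suc n)) * w)" unfolding tr ..
  finally show ?case .
qed

lemma frac_aux:
  fixes V DD R S M :: real
  assumes "V * DD = R * S" "R > 0" "DD > 0"
  shows "M * V / R = M * S / DD"
proof -
  have "V = R * S / DD" using assms by (simp add: field_simps)
  then show ?thesis using assms by (simp add: field_simps)
qed

lemma frac2:
  fixes M X Dn :: real assumes "Dn > 0"
  shows "M * ((1 - X) / 2) / Dn = (M / 2) * (1 / Dn - X / Dn)"
  using assms by (simp add: field_simps)

lemma pointwise:
  fixes mu p :: real
  assumes mu: "mu > 0"
  shows "(mu * vv (1 + mu\<^sup>2) p n)\<^sup>2 / (1 + mu\<^sup>2) ^ n =
     (mu\<^sup>2 / 2) * (1 / (mu\<^sup>2 + (sin p)\<^sup>2) - hh (1 / sqrt (1 + mu\<^sup>2)) mu n p)"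
proof -
  define rho where "rho = sqrt (1 + mu\<^sup>2)"
  have rho: "rho > 0" "rho\<^sup>2 = 1 + mu\<^sup>2" unfolding rho_def by (simp_all add: add_pos_nonneg)
  have rho1: "rho > 1" unfolding rho_def using mu by (simp add: real_less_rsqrt)
  define c0 where "c0 = 1 / rho"
  have c0: "0 < c0" "c0 < 1" unfolding c0_def using rho1 by auto
  define w where "w = arccos (c0 * cos p)"
  have b: "(c0 * cos p)\<^sup>2 < 1" by (rule c0_bound[OF c0])
  then have b': "\<bar>c0 * cos p\<bar> < 1" by (simp add: abs_square_less_1)
  have cw: "cos w = c0 * cos p" unfolding w_def using b' by (intro cos_arccos) auto
  have cp: "cos p = rho * cos w" unfolding cw c0_def using rho by simp
  have sw: "sin w = sqrt (1 - (c0 * cos p)\<^sup>2)" unfolding w_def using b' by (intro sin_arccos) auto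
  have den: "mu\<^sup>2 + (sin p)\<^sup>2 > 0" using mu by (simp add: add_pos_nonneg)
  have key: "rho\<^sup>2 * (sin w)\<^sup>2 = mu\<^sup>2 + (sin p)\<^sup>2"
  proof -
    have "(sin w)\<^sup>2 = 1 - (c0 * cos p)\<^sup>2" unfolding sw using b by simp
    then have "rho\<^sup>2 * (sin w)\<^sup>2 = rho\<^sup>2 - (rho * c0)\<^sup>2 * (cos p)\<^sup>2"
      by algebra
    also have "rho * c0 = 1" unfolding c0_def using rho by simp
    finally have "rho\<^sup>2 * (sin w)\<^sup>2 = rho\<^sup>2 - (cos p)\<^sup>2" by simp
    also have "\<dots> = mu\<^sup>2 + (sin p)\<^sup>2" unfolding rho(2) using sin_cos_squared_add[of p] by algebra
    finally show ?thesis .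
  qed
  have id: "rho * vv (rho\<^sup>2) p n * sin w = rho ^ n * sin (real n * w)" by (rule vv_sin[OF rho(1) cp])
  then have "(rho * vv (rho\<^sup>2) p n * sin w)\<^sup>2 = (rho ^ n * sin (real n * w))\<^sup>2" by simp
  then have "(vv (rho\<^sup>2) p n)\<^sup>2 * (rho\<^sup>2 * (sin w)\<^sup>2) = (rho\<^sup>2) ^ n * (sin (real n * w))\<^sup>2"
    by (simp add: power_mult_distrib power_mult[symmetric] mult.commute mult.left_commute power_even_eq)
  then have "(vv (rho\<^sup>2) p n)\<^sup>2 * (mu\<^sup>2 + (sin p)\<^sup>2) = (rho\<^sup>2) ^ n * (sin (real n * w))\<^sup>2"
    unfolding key .
  then have E: "(vv (1 + mu\<^sup>2) p n)\<^sup>2 * (mu\<^sup>2 + (sin p)\<^sup>2) = (1 + mu\<^sup>2) ^ n * (sin (real n * w))\<^sup>2"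
    unfolding rho(2) .
  have rn: "(1 + mu\<^sup>2) ^ n > 0" by (simp add: add_pos_nonneg)
  have "(mu * vv (1 + mu\<^sup>2) p n)\<^sup>2 / (1 + mu\<^sup>2) ^ n = mu\<^sup>2 * (sin (real n * w))\<^sup>2 / (mu\<^sup>2 + (sin p)\<^sup>2)"
    unfolding power_mult_distrib by (rule frac_aux[OF E rn den])
  also have "(sin (real n * w))\<^sup>2 = (1 - cos (2 * real n * w)) / 2"
    using cos_double_sin[of "real n * w"] by (simp add: algebra_simps)
  also have "mu\<^sup>2 * ((1 - cos (2 * real n * w)) / 2) / (mu\<^sup>2 + (sin p)\<^sup>2) =
      (mu\<^sup>2 / 2) * (1 / (mu\<^sup>2 + (sin p)\<^sup>2) - hh c0 mu n p)"
    unfolding hh_def w_def by (rule frac2[OF den])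
  finally show ?thesis unfolding c0_def rho_def .
qed

lemma sum_formula:
  fixes mu :: real assumes mu: "mu > 0"
  shows "(\<Sum>k\<in>{- int n..int n}. (LL mu n k)\<^sup>2) / (1 + mu\<^sup>2) ^ n =
     mu / (2 * sqrt (1 + mu\<^sup>2)) - mu\<^sup>2 / (4 * pi) * integral {-pi..pi} (hh (1 / sqrt (1 + mu\<^sup>2)) mu n)"
proof -
  define rho where "rho = sqrt (1 + mu\<^sup>2)"
  have rho1: "rho > 1" unfolding rho_def using mu by (simp add: real_less_rsqrt)
  define c0 where "c0 = 1 / rho"
  have c0: "0 < c0" "c0 < 1" unfolding c0_def using rho1 by auto
  define I where "I = integral {-pi..pi} (hh c0 mu n)"
  define SS where "SS = (\<Sum>k\<in>{- int n..int n}. (LL mu n k)\<^sup>2)"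
  have rn: "(1 + mu\<^sup>2) ^ n > 0" by (simp add: add_pos_nonneg)
  have P: "((\<lambda>p. (\<Sum>k\<in>{- int n..int n}. LL mu n k * cos (of_int k * p))\<^sup>2) has_integral (2 * pi * SS)) {-pi..pi}"
    unfolding SS_def by (rule parseval_cos) (auto simp: LL_sym)
  have "\<And>p. (\<Sum>k\<in>{- int n..int n}. LL mu n k * cos (of_int k * p)) = mu * vv (1 + mu\<^sup>2) p n"
    by (rule LL_cos) simp
  then have P2: "((\<lambda>p. (mu * vv (1 + mu\<^sup>2) p n)\<^sup>2) has_integral (2 * pi * SS)) {-pi..pi}"
    using P by simp
  have P3: "((\<lambda>p. (mu * vv (1 + mu\<^sup>2) p n)\<^sup>2 / (1 + mu\<^sup>2) ^ n) has_integral (2 * pi * SS / (1 + mu\<^sup>2) ^ n)) {-pi..pi}"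
    by (rule has_integral_divide[OF P2])
  have hi: "(hh c0 mu n has_integral I) {-pi..pi}"
    unfolding I_def by (rule integrable_integral[OF hh_integrable[OF c0 mu]])
  have Q: "((\<lambda>p. (mu\<^sup>2 / 2) * (1 / (mu\<^sup>2 + (sin p)\<^sup>2) - hh c0 mu n p)) has_integral
      (mu\<^sup>2 / 2) * (2 * pi / (mu * rho) - I)) {-pi..pi}"
    unfolding rho_def by (intro has_integral_mult_right has_integral_diff int_g[OF mu] hi)
  have fe: "(\<lambda>p. (mu * vv (1 + mu\<^sup>2) p n)\<^sup>2 / (1 + mu\<^sup>2) ^ n) =
      (\<lambda>p. (mu\<^sup>2 / 2) * (1 / (mu\<^sup>2 + (sin p)\<^sup>2) - hh c0 mu n p))"
    unfolding c0_def rho_def by (rule ext, rule pointwise[OF mu])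
  have "2 * pi * SS / (1 + mu\<^sup>2) ^ n = (mu\<^sup>2 / 2) * (2 * pi / (mu * rho) - I)"
    using P3 Q unfolding fe by (rule has_integral_unique)
  then have "SS / (1 + mu\<^sup>2) ^ n = ((mu\<^sup>2 / 2) * (2 * pi / (mu * rho) - I)) / (2 * pi)"
    by (simp add: field_simps)
  also have "\<dots> = mu / (2 * rho) - mu\<^sup>2 / (4 * pi) * I"
    using mu rho1 by (simp add: field_simps power2_eq_square)
  finally show ?thesis unfolding SS_def I_def c0_def rho_def .
qed

lemma sum_limit:
  fixes mu :: real assumes mu: "mu > 0"
  shows "(\<lambda>n. (\<Sum>k\<in>{- int n..int n}. (LL mu n k)\<^sup>2) / (1 + mu\<^sup>2) ^ n) \<longlonglongrightarrow> mu / (2 * sqrt (1 + mu\<^sup>2))"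
proof -
  define rho where "rho = sqrt (1 + mu\<^sup>2)"
  have rho1: "rho > 1" unfolding rho_def using mu by (simp add: real_less_rsqrt)
  have c0: "0 < 1 / rho" "1 / rho < 1" using rho1 by auto
  have "(\<lambda>n. mu / (2 * rho) - mu\<^sup>2 / (4 * pi) * integral {-pi..pi} (hh (1 / rho) mu n))
      \<longlonglongrightarrow> mu / (2 * rho) - mu\<^sup>2 / (4 * pi) * 0"
    by (intro tendsto_intros decay[OF c0 mu])
  then show ?thesis unfolding sum_formula[OF mu] rho_def by simp
qed

lemma a1_formula:
  assumes e: "eps > 0"
  shows "a1 (of_int k * eps) (real (Suc n) * eps) m eps = (1 + m\<^sup>2 * eps\<^sup>2) powr (- real n / 2) * LL (m * eps) n k"
proof -
  let ?x = "of_int k * eps" and ?t = "real (Suc n) * eps"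
  have fin: "finite (paths_to eps ?x ?t)" by (rule paths_finite[OF e])
  have S: "(\<Sum>s\<in>paths_to eps ?x ?t. (- \<i> * complex_of_real (m * eps)) ^ turns s) = SR m eps ?x ?t + SL m eps ?x ?t"
    unfolding SR_def SL_def by (rule sum_split_paths[OF e fin])
  have ex: "(1 - ?t / eps) / 2 = - real n / 2" using e by simp
  have RL: "SR m eps ?x ?t = complex_of_real (fst (RL (m * eps) n k))"
     "SL m eps ?x ?t = - \<i> * complex_of_real (LL (m * eps) n k)"
    using S_RL[OF e, of m k n] unfolding LL_def by auto
  show ?thesis unfolding a1_def a_def S RL ex by simp
qed

lemma powr_sq:
  fixes x :: real assumes "x > 0"
  shows "(x powr (- real n / 2))\<^sup>2 = 1 / x ^ n"
proof -
  have "(x powr (- real n / 2))\<^sup>2 = x powr (- real n / 2) * x powr (- real n / 2)" by (simp add: power2_eq_square)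
  also have "\<dots> = x powr (- real n)" by (simp add: powr_add[symmetric])
  also have "\<dots> = 1 / x ^ n" using assms by (simp add: powr_minus powr_realpow divide_inverse)
  finally show ?thesis .
qed

lemma infsum_formula:
  assumes e: "eps > 0"
  shows "infsum (\<lambda>x. (a1 x (real (Suc n) * eps) m eps)\<^sup>2) {x. \<exists>k::int. x = of_int k * eps} =
     (\<Sum>k\<in>{- int n..int n}. (LL (m * eps) n k)\<^sup>2) / (1 + (m * eps)\<^sup>2) ^ n"
proof -
  have X: "{x. \<exists>k::int. x = of_int k * eps} = (\<lambda>k::int. of_int k * eps) ` UNIV" by auto
  have inj: "inj_on (\<lambda>k::int. of_int k * eps) UNIV" using e by (auto simp: inj_on_def)
  have pos: "1 + m\<^sup>2 * eps\<^sup>2 > 0" by (simp add: add_pos_nonneg)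
  have me: "(m * eps)\<^sup>2 = m\<^sup>2 * eps\<^sup>2" by (simp add: power_mult_distrib)
  have "infsum (\<lambda>x. (a1 x (real (Suc n) * eps) m eps)\<^sup>2) {x. \<exists>k::int. x = of_int k * eps} =
      infsum (\<lambda>k::int. ((1 + m\<^sup>2 * eps\<^sup>2) powr (- real n / 2) * LL (m * eps) n k)\<^sup>2) UNIV"
    unfolding X infsum_reindex[OF inj] o_def a1_formula[OF e] ..
  also have "\<dots> = infsum (\<lambda>k::int. ((1 + m\<^sup>2 * eps\<^sup>2) powr (- real n / 2) * LL (m * eps) n k)\<^sup>2) {- int n..int n}"
    by (rule infsum_cong_neutral) (auto simp: LL_supp)
  also have "\<dots> = (\<Sum>k\<in>{- int n..int n}. ((1 + m\<^sup>2 * eps\<^sup>2) powr (- real n / 2) * LL (m * eps) n k)\<^sup>2)"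
    by (rule infsum_finite) simp
  also have "\<dots> = (\<Sum>k\<in>{- int n..int n}. (LL (m * eps) n k)\<^sup>2) / (1 + (m * eps)\<^sup>2) ^ n"
    unfolding power_mult_distrib[of "(1 + m\<^sup>2 * eps\<^sup>2) powr (- real n / 2)"] powr_sq[OF pos] me
    by (simp add: sum_divide_distrib)
  finally show ?thesis .
qed

theorem theorem2:
  fixes eps m :: real
  assumes "eps > 0" and "m \<ge> 0" and "m * eps \<le> 1"
  shows "(\<lambda>n::nat. infsum (\<lambda>x. (a1 x (real n * eps) m eps)\<^sup>2)
                          {x. \<exists>k::int. x = of_int k * eps})
           \<longlonglongrightarrow> m * eps / (2 * sqrt (1 + m\<^sup>2 * eps\<^sup>2))"
proof -
  have me: "(m * eps)\<^sup>2 = m\<^sup>2 * eps\<^sup>2" by (simp add: power_mult_distrib)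
  have L: "(\<lambda>n. (\<Sum>k\<in>{- int n..int n}. (LL (m * eps) n k)\<^sup>2) / (1 + (m * eps)\<^sup>2) ^ n)
      \<longlonglongrightarrow> m * eps / (2 * sqrt (1 + (m * eps)\<^sup>2))"
  proof (cases "m = 0")
    case True
    then show ?thesis by (simp add: LL_mu0)
  next
    case False
    then have "m * eps > 0" using assms by simp
    then show ?thesis by (rule sum_limit)
  qed
  have "(\<lambda>n. infsum (\<lambda>x. (a1 x (real (Suc n) * eps) m eps)\<^sup>2) {x. \<exists>k::int. x = of_int k * eps})
      \<longlonglongrightarrow> m * eps / (2 * sqrt (1 + m\<^sup>2 * eps\<^sup>2))"
    unfolding infsum_formula[OF assms(1)] using L unfolding me .
  then show ?thesis by (rule LIMSEQ_imp_Suc)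
qed

end
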